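(* Let $\mathbf{P}$ be the convex hull of $\{\chi_\mu : \mu \text{ is a non-uniformly stable matching in } G\}$ and let $\mathbf{S}$ be the set of vectors $x\in\mathbb{R}_+^E$ satisfying (1) $x(E(v))\le 1$ for all $v\in V$; (2) $x(e)+\sum_{v\in e}x(E[\succ_v e])\ge 1$ for all $e\in E_1$; (3) $x(E[\sim_v e])+\sum_{w\in e}x(E[\succ_w e])\ge 1$ for all $e\in E_2$ and all $v\in e$. Then $\mathbf{P}=\mathbf{S}$.
   Context: Setting: $G=(V,E)$ is a finite simple bipartite graph with $V=V_1\sqcup V_2$, every edge joining a vertex of $V_1$ to a vertex of $V_2$; an edge is identified with the set of its two endpoints. $E$ is partitioned into $E_1,E_2$ ($E_1\cap E_2=\emptyset$, $E_1\cup E_2=E$). For $F\subseteq E$ and $v\in V$, $F(v)$ is the set of edges of $F$ incident to $v$. For every $v\in V$ there is a transitive and complete binary relation $\succsim_v$ on $E(v)\cup\{\emptyset\}$ with $e\succsim_v\emptyset$ and $\emptyset\not\succsim_v e$ for all $e\in E(v)$; $e\succ_v f$ means $e\succsim_v f$ and $f\not\succsim_v e$; $e\sim_v f$ means both $e\succsim_v f$ and $f\succsim_v e$. A matching is $\mu\subseteq E$ with $|\mu(v)|\le1$ for all $v$; $\mu(v)$ denotes the unique edge of $\mu$ at $v$, or $\emptyset$ if none. An edge $e\in E\setminus\mu$ weakly blocks $\mu$ if $e\succsim_v\mu(v)$ for every $v\in e$; it strongly blocks $\mu$ if additionally $e\succ_w\mu(w)$ for some $w\in e$. A matching $\mu$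 is non-uniformly stable if no edge of $E_1\setminus\mu$ weakly blocks $\mu$ and no edge of $E_2\setminus\mu$ strongly blocks $\mu$. For $x\in\mathbb{R}_+^E$ and $F\subseteq E$, $x(F)=\sum_{e\in F}x(e)$; $\chi_F\in\{0,1\}^E$ is the characteristic vector of $F$. For $v\in V$ and $e\in E(v)$: $E[\succ_v e]=\{f\in E(v): f\succ_v e\}$ and $E[\sim_v e]=\{f\in E(v): f\sim_v e\}$. *)

theory Defs
  imports "HOL-Analysis.Analysis"
begin

(* Edges are 2-element vertex sets ('v set); the "empty edge" \<emptyset> is the empty set {}.
   Preferences: pref v e f means  e \<succeq>_v f. *)

definition inc :: "'v set set \<Rightarrow> 'v \<Rightarrow> 'v set set" where
  "inc F v = {e \<in> F. v \<in> e}"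

definition strict_pref :: "('v \<Rightarrow> 'v set \<Rightarrow> 'v set \<Rightarrow> bool) \<Rightarrow> 'v \<Rightarrow> 'v set \<Rightarrow> 'v set \<Rightarrow> bool" where
  "strict_pref pref v e f \<longleftrightarrow> pref v e f \<and> \<not> pref v f e"

definition indiff :: "('v \<Rightarrow> 'v set \<Rightarrow> 'v set \<Rightarrow> bool) \<Rightarrow> 'v \<Rightarrow> 'v set \<Rightarrow> 'v set \<Rightarrow> bool" where
  "indiff pref v e f \<longleftrightarrow> pref v e f \<and> pref v f e"

definition better :: "'v set set \<Rightarrow> ('v \<Rightarrow> 'v set \<Rightarrow> 'v set \<Rightarrow> bool) \<Rightarrow> 'v \<Rightarrow> 'v set \<Rightarrow> 'v set set" where
  "better E pref v e = {f \<in> inc E v. strict_pref pref v f e}"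

definition equiv_edges :: "'v set set \<Rightarrow> ('v \<Rightarrow> 'v set \<Rightarrow> 'v set \<Rightarrow> bool) \<Rightarrow> 'v \<Rightarrow> 'v set \<Rightarrow> 'v set set" where
  "equiv_edges E pref v e = {f \<in> inc E v. indiff pref v f e}"

definition setting ::
  "'v set \<Rightarrow> 'v set \<Rightarrow> 'v set set \<Rightarrow> 'v set set \<Rightarrow> 'v set set \<Rightarrow> ('v \<Rightarrow> 'v set \<Rightarrow> 'v set \<Rightarrow> bool) \<Rightarrow> bool" where
  "setting V1 V2 E E1 E2 pref \<longleftrightarrow>
     finite (V1 \<union> V2) \<and> V1 \<inter> V2 = {} \<and>
     (\<forall>e\<in>E. \<exists>a b. a \<in> V1 \<and> b \<in> V2 \<and> e = {a, b}) \<and>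
     E1 \<inter> E2 = {} \<and> E1 \<union> E2 = E \<and>
     (\<forall>v \<in> V1 \<union> V2.
        (\<forall>e\<in>insert {} (inc E v). \<forall>f\<in>insert {} (inc E v). \<forall>g\<in>insert {} (inc E v).
            pref v e f \<longrightarrow> pref v f g \<longrightarrow> pref v e g) \<and>
        (\<forall>e\<in>insert {} (inc E v). \<forall>f\<in>insert {} (inc E v). pref v e f \<or> pref v f e) \<and>
        (\<forall>e\<in>inc E v. pref v e {} \<and> \<not> pref v {} e))"

definition matching :: "'v set set \<Rightarrow> 'v set set \<Rightarrow> bool" where
  "matching E M \<longleftrightarrow> M \<subseteq> E \<and> (\<forall>v. card (inc M v) \<le> 1)"

definition medge :: "'v set set \<Rightarrow> 'v \<Rightarrow> 'v set" where
  "medge M v = (if \<exists>e\<in>M. v \<in> e then (THE e. e \<in> M \<and> v \<in> e) else {})"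

definition weakly_blocks :: "('v \<Rightarrow> 'v set \<Rightarrow> 'v set \<Rightarrow> bool) \<Rightarrow> 'v set set \<Rightarrow> 'v set \<Rightarrow> bool" where
  "weakly_blocks pref M e \<longleftrightarrow> e \<notin> M \<and> (\<forall>v\<in>e. pref v e (medge M v))"

definition strongly_blocks :: "('v \<Rightarrow> 'v set \<Rightarrow> 'v set \<Rightarrow> bool) \<Rightarrow> 'v set set \<Rightarrow> 'v set \<Rightarrow> bool" where
  "strongly_blocks pref M e \<longleftrightarrow> weakly_blocks pref M e \<and> (\<exists>w\<in>e. strict_pref pref w e (medge M w))"

definition nu_stable ::
  "'v set set \<Rightarrow> 'v set set \<Rightarrow> 'v set set \<Rightarrow> ('v \<Rightarrow> 'v set \<Rightarrow> 'v set \<Rightarrow> bool) \<Rightarrow> 'v set set \<Rightarrow> bool" where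
  "nu_stable E E1 E2 pref M \<longleftrightarrow> matching E M \<and>
     (\<forall>e \<in> E1 - M. \<not> weakly_blocks pref M e) \<and>
     (\<forall>e \<in> E2 - M. \<not> strongly_blocks pref M e)"

(* Vectors in R^E are functions 'v set \<Rightarrow> real vanishing outside E.
   Convex hull of a set A of such vectors, written out explicitly (finite convex combinations). *)
definition conv_hull :: "('a \<Rightarrow> real) set \<Rightarrow> ('a \<Rightarrow> real) set" where
  "conv_hull A = {x. \<exists>S u. finite S \<and> S \<subseteq> A \<and> (\<forall>s\<in>S. 0 \<le> u s) \<and> sum u S = 1 \<and>
                        x = (\<lambda>e. \<Sum>s\<in>S. u s * s e)}"

definition char_vec :: "'a set \<Rightarrow> 'a \<Rightarrow> real" where
  "char_vec F = (\<lambda>e. if e \<in> F then 1 else 0)"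

end

theory Submission
  imports Defs
begin



locale nus =
  fixes V1 V2 :: "'v set" and E E1 E2 :: "'v set set"
    and pref :: "'v \<Rightarrow> 'v set \<Rightarrow> 'v set \<Rightarrow> bool"
  assumes setting: "setting V1 V2 E E1 E2 pref"
begin

abbreviation "V \<equiv> V1 \<union> V2"
abbreviation "B \<equiv> better E pref"
abbreviation "Q \<equiv> equiv_edges E pref"
definition W where "W v e = {f \<in> inc E v. strict_pref pref v e f}"

lemmas sp = setting[unfolded setting_def]
lemma finV: "finite V" using sp by (rule conjunct1)
lemma V12: "V1 \<inter> V2 = {}" using sp[THEN conjunct2] by (rule conjunct1)
lemma edge_ex: "\<forall>e\<in>E. \<exists>a b. a \<in> V1 \<and> b \<in> V2 \<and> e = {a, b}"
  using sp[THEN conjunct2, THEN conjunct2] by (rule conjunct1)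
lemma E12: "E1 \<inter> E2 = {}" "E1 \<union> E2 = E"
  using sp[THEN conjunct2, THEN conjunct2, THEN conjunct2] by (rule conjunct1,
   metis conjunct1 conjunct2)
lemma prefs_all: "\<forall>v \<in> V1 \<union> V2.
        (\<forall>e\<in>insert {} (inc E v). \<forall>f\<in>insert {} (inc E v). \<forall>g\<in>insert {} (inc E v).
            pref v e f \<longrightarrow> pref v f g \<longrightarrow> pref v e g) \<and>
        (\<forall>e\<in>insert {} (inc E v). \<forall>f\<in>insert {} (inc E v). pref v e f \<or> pref v f e) \<and>
        (\<forall>e\<in>inc E v. pref v e {} \<and> \<not> pref v {} e)"
  using sp[THEN conjunct2, THEN conjunct2, THEN conjunct2, THEN conjunct2] by (rule conjunct2)

lemma edge_form: "e \<in> E \<Longrightarrow> \<exists>a b. a \<in> V1 \<and> b \<in> V2 \<and> e = {a,b} \<and> a \<noteq> b"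
proof -
  assume "e \<in> E"
  then obtain a b where ab: "a \<in> V1" "b \<in> V2" "e = {a,b}" using edge_ex by blast
  hence "a \<noteq> b" using V12 by blast
  thus ?thesis using ab by blast
qed

lemma finE: "finite E"
proof -
  have "E \<subseteq> (\<lambda>(a,b). {a,b}) ` (V1 \<times> V2)" using edge_form by fastforce
  moreover have "finite (V1 \<times> V2)" using finV by auto
  ultimately show ?thesis by (meson finite_imageI finite_subset)
qed


lemma edge_sub: "e \<in> E \<Longrightarrow> e \<subseteq> V" using edge_form by blast
lemma edge_ne: "e \<in> E \<Longrightarrow> e \<noteq> {}" using edge_form by blast

lemma inc_sub: "inc F v \<subseteq> F" by (auto simp: inc_def)
lemma inc_iff: "f \<in> inc F v \<longleftrightarrow> f \<in> F \<and> v \<in> f" by (auto simp: inc_def)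
lemma fin_inc: "finite (inc E v)" using finE by (simp add: inc_def)
lemma incV: "e \<in> inc E v \<Longrightarrow> v \<in> V" using edge_sub by (auto simp: inc_def)

lemma prefs: "v \<in> V \<Longrightarrow>
        (\<forall>e\<in>insert {} (inc E v). \<forall>f\<in>insert {} (inc E v). \<forall>g\<in>insert {} (inc E v).
            pref v e f \<longrightarrow> pref v f g \<longrightarrow> pref v e g) \<and>
        (\<forall>e\<in>insert {} (inc E v). \<forall>f\<in>insert {} (inc E v). pref v e f \<or> pref v f e) \<and>
        (\<forall>e\<in>inc E v. pref v e {} \<and> \<not> pref v {} e)"
  using prefs_all by (rule bspec)

lemma ptrans: "e \<in> inc E v \<Longrightarrow> f \<in> inc E v \<Longrightarrow> g \<in> inc E v \<Longrightarrow> pref v e f \<Longrightarrow> pref v f g \<Longrightarrow> pref v e g"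
  using prefs[OF incV] by blast
lemma ptotal: "e \<in> inc E v \<Longrightarrow> f \<in> inc E v \<Longrightarrow> pref v e f \<or> pref v f e"
  using prefs[OF incV] by blast
lemma prefl: "e \<in> inc E v \<Longrightarrow> pref v e e" using ptotal by blast
lemma pempty: "e \<in> inc E v \<Longrightarrow> pref v e {}" "e \<in> inc E v \<Longrightarrow> \<not> pref v {} e"
  using prefs[OF incV] by blast+

lemma dc: "(\<Sum>v\<in>V. \<Sum>e\<in>inc E v. g v e) = (\<Sum>e\<in>E. \<Sum>v\<in>e. g v e)"
proof -
  have "(\<Sum>v\<in>V. \<Sum>e\<in>inc E v. g v e) = (\<Sum>v\<in>V. \<Sum>e\<in>{e. e \<in> E \<and> v \<in> e}. g v e)"
    by (simp add: inc_def)
  also have "\<dots> = (\<Sum>e\<in>E. \<Sum>v\<in>{v. v \<in> V \<and> v \<in> e}. g v e)"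
    by (rule sum.swap_restrict[OF finV finE])
  also have "\<dots> = (\<Sum>e\<in>E. \<Sum>v\<in>e. g v e)"
  proof (rule sum.cong[OF refl])
    fix e assume "e \<in> E"
    hence "{v. v \<in> V \<and> v \<in> e} = e" using edge_sub by blast
    thus "(\<Sum>v\<in>{v. v \<in> V \<and> v \<in> e}. g v e) = (\<Sum>v\<in>e. g v e)" by simp
  qed
  finally show ?thesis .
qed

lemma sum_edge: "e \<in> E \<Longrightarrow> \<exists>a b. a \<in> V1 \<and> b \<in> V2 \<and> e = {a,b} \<and> a \<noteq> b \<and> (\<forall>g. (\<Sum>v\<in>e. g v) = g a + g b)"
  using edge_form by fastforce


lemma strict_irrefl: "\<not> strict_pref pref v e e" by (simp add: strict_pref_def)

lemma trich: "e \<in> inc E v \<Longrightarrow> f \<in> inc E v \<Longrightarrow>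
   strict_pref pref v f e \<or> indiff pref v f e \<or> strict_pref pref v e f"
  using ptotal by (auto simp: strict_pref_def indiff_def)

lemma st1: "e \<in> inc E v \<Longrightarrow> f \<in> inc E v \<Longrightarrow> g \<in> inc E v \<Longrightarrow>
   strict_pref pref v f g \<Longrightarrow> pref v g e \<Longrightarrow> strict_pref pref v f e"
  unfolding strict_pref_def using ptrans by blast
lemma st2: "e \<in> inc E v \<Longrightarrow> f \<in> inc E v \<Longrightarrow> g \<in> inc E v \<Longrightarrow>
   pref v f g \<Longrightarrow> strict_pref pref v g e \<Longrightarrow> strict_pref pref v f e"
  unfolding strict_pref_def using ptrans by blast

lemma BQW_sub: "B v e \<subseteq> inc E v" "Q v e \<subseteq> inc E v" "W v e \<subseteq> inc E v"
  by (auto simp: better_def equiv_edges_def W_def)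

lemma BQW_E: "B v e \<subseteq> E" "Q v e \<subseteq> E" "W v e \<subseteq> E"
  by (auto simp: better_def equiv_edges_def W_def inc_def)

lemma fin_BQW: "finite (B v e)" "finite (Q v e)" "finite (W v e)"
  using BQW_sub fin_inc finite_subset by metis+

lemma mem_B: "f \<in> B v e \<longleftrightarrow> f \<in> inc E v \<and> strict_pref pref v f e" by (simp add: better_def)
lemma mem_Q: "f \<in> Q v e \<longleftrightarrow> f \<in> inc E v \<and> indiff pref v f e" by (simp add: equiv_edges_def)
lemma mem_W: "f \<in> W v e \<longleftrightarrow> f \<in> inc E v \<and> strict_pref pref v e f" by (simp add: W_def)

lemma partition: "e \<in> inc E v \<Longrightarrow> inc E v = B v e \<union> Q v e \<union> W v e"
  by (auto simp: mem_B mem_Q mem_W) (metis trich)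

lemma disj: "B v e \<inter> Q v e = {}" "B v e \<inter> W v e = {}" "Q v e \<inter> W v e = {}"
  by (auto simp: mem_B mem_Q mem_W strict_pref_def indiff_def)

lemma Q_refl: "e \<in> inc E v \<Longrightarrow> e \<in> Q v e" using prefl by (auto simp: mem_Q indiff_def)

lemma Q_eq: "f \<in> Q v e \<Longrightarrow> e \<in> inc E v \<Longrightarrow> Q v f = Q v e"
  unfolding equiv_edges_def indiff_def using ptrans by blast

lemma sum_part: "e \<in> inc E v \<Longrightarrow> sum x (inc E v) = sum x (B v e) + sum x (Q v e) + sum x (W v e)"
proof -
  assume a: "e \<in> inc E v"
  have "sum x (inc E v) = sum x (B v e \<union> Q v e \<union> W v e)" using partition[OF a] by simp
  also have "\<dots> = sum x (B v e \<union> Q v e) + sum x (W v e)"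
    by (rule sum.union_disjoint) (simp_all add: fin_BQW Int_Un_distrib2 disj)
  also have "sum x (B v e \<union> Q v e) = sum x (B v e) + sum x (Q v e)"
    by (rule sum.union_disjoint) (simp_all add: fin_BQW Int_Un_distrib2 disj)
  finally show ?thesis .
qed

end

lemma linalg:
  fixes c :: "'j \<Rightarrow> 'a \<Rightarrow> real"
  assumes "finite J" "finite X" "card J < card X"
  shows "\<exists>d. (\<forall>y. y \<notin> X \<longrightarrow> d y = 0) \<and> (\<exists>y\<in>X. d y \<noteq> 0) \<and> (\<forall>j\<in>J. (\<Sum>y\<in>X. c j y * d y) = 0)"
  using assms
proof (induction J arbitrary: X c rule: finite_induct)
  case empty
  then obtain y where y: "y \<in> X" by fastforce
  show ?case by (rule exI[of _ "\<lambda>z. if z = y then 1 else 0"]) (use y in auto)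
next
  case (insert j J)
  show ?case
  proof (cases "\<forall>y\<in>X. c j y = 0")
    case True
    from insert.IH[of X c] insert.prems insert.hyps obtain d where
      d: "(\<forall>y. y \<notin> X \<longrightarrow> d y = 0)" "(\<exists>y\<in>X. d y \<noteq> 0)" "(\<forall>j\<in>J. (\<Sum>y\<in>X. c j y * d y) = 0)" by auto
    show ?thesis using d True by (intro exI[of _ d]) auto
  next
    case False
    then obtain z where z: "z \<in> X" "c j z \<noteq> 0" by auto
    define X' where "X' = X - {z}"
    define c' where "c' i y = c i y - c i z * c j y / c j z" for i y
    have cardX': "card J < card X'" using insert.prems insert.hyps z unfolding X'_def
      by (simp add: card_Diff_singleton)
    from insert.IH[of X' c'] cardX' insert.prems obtain d' where
      d': "(\<forall>y. y \<notin> X' \<longrightarrow> d' y = 0)" "(\<exists>y\<in>X'. d' y \<noteq> 0)" "(\<forall>i\<in>J. (\<Sum>y\<in>X'. c' i y * d' y) = 0)"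
      unfolding X'_def by auto
    define dz where "dz = - (\<Sum>y\<in>X'. c j y * d' y) / c j z"
    define d where "d y = (if y = z then dz else d' y)" for y
    have finX': "finite X'" using insert.prems X'_def by auto
    have split: "(\<Sum>y\<in>X. f y) = f z + (\<Sum>y\<in>X'. f y)" for f :: "'a \<Rightarrow> real"
      using z insert.prems unfolding X'_def by (simp add: sum.remove)
    have dX': "(\<Sum>y\<in>X'. g y * d y) = (\<Sum>y\<in>X'. g y * d' y)" for g
      by (rule sum.cong) (auto simp: d_def X'_def)
    have eqj: "(\<Sum>y\<in>X. c j y * d y) = 0"
      unfolding split dX' using z by (simp add: d_def dz_def)
    have eqi: "(\<Sum>y\<in>X. c i y * d y) = 0" if i: "i \<in> J" for i
    proof -
      have "0 = (\<Sum>y\<in>X'. c' i y * d' y)" using d' i by auto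
      also have "\<dots> = (\<Sum>y\<in>X'. c i y * d' y) - c i z / c j z * (\<Sum>y\<in>X'. c j y * d' y)"
        unfolding c'_def by (simp add: algebra_simps sum_subtractf sum_distrib_left)
      also have "\<dots> = (\<Sum>y\<in>X'. c i y * d' y) + c i z * dz"
        unfolding dz_def using z by (simp add: field_simps)
      also have "\<dots> = (\<Sum>y\<in>X. c i y * d y)"
        unfolding split dX' by (simp add: d_def)
      finally show ?thesis by simp
    qed
    show ?thesis
    proof (intro exI[of _ d] conjI)
      show "\<forall>y. y \<notin> X \<longrightarrow> d y = 0" using d' by (auto simp: d_def X'_def z)
      show "\<exists>y\<in>X. d y \<noteq> 0" using d' by (auto simp: d_def X'_def)
      show "\<forall>i\<in>insert j J. (\<Sum>y\<in>X. c i y * d y) = 0" using eqj eqi by auto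
    qed
  qed
qed


lemma ch_single: "a \<in> A \<Longrightarrow> a \<in> conv_hull A"
  unfolding conv_hull_def by (rule CollectI, rule exI[of _ "{a}"], rule exI[of _ "\<lambda>_. 1"]) auto

lemma ch_comb:
  assumes y: "y \<in> conv_hull A" and z: "z \<in> conv_hull A" and m: "0 \<le> \<mu>" "\<mu> \<le> 1"
  shows "(\<lambda>e. \<mu> * y e + (1 - \<mu>) * z e) \<in> conv_hull A"
proof -
  obtain Sy uy where Y: "finite Sy" "Sy \<subseteq> A" "\<forall>s\<in>Sy. 0 \<le> uy s" "sum uy Sy = 1" "y = (\<lambda>e. \<Sum>s\<in>Sy. uy s * s e)"
    using y unfolding conv_hull_def by blast
  obtain Sz uz where Z: "finite Sz" "Sz \<subseteq> A" "\<forall>s\<in>Sz. 0 \<le> uz s" "sum uz Sz = 1" "z = (\<lambda>e. \<Sum>s\<in>Sz. uz s * s e)"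
    using z unfolding conv_hull_def by blast
  define U where "U = Sy \<union> Sz"
  define u where "u s = \<mu> * (if s \<in> Sy then uy s else 0) + (1 - \<mu>) * (if s \<in> Sz then uz s else 0)" for s
  have finU: "finite U" using Y Z U_def by auto
  have r1: "(\<Sum>s\<in>U. (if s \<in> Sy then f s else 0)) = sum f Sy" for f :: "_ \<Rightarrow> real"
    using sum.inter_restrict[OF finU, of f Sy] U_def by (simp add: Int_absorb1)
  have r2: "(\<Sum>s\<in>U. (if s \<in> Sz then f s else 0)) = sum f Sz" for f :: "_ \<Rightarrow> real"
    using sum.inter_restrict[OF finU, of f Sz] U_def by (simp add: Int_absorb1 Int_commute)
  have "sum u U = \<mu> * sum uy Sy + (1 - \<mu>) * sum uz Sz"
    unfolding u_def sum.distrib sum_distrib_left[symmetric] r1 r2 by simp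
  hence su: "sum u U = 1" using Y Z by simp
  have xe: "\<mu> * y e + (1 - \<mu>) * z e = (\<Sum>s\<in>U. u s * s e)" for e
  proof -
    have "(\<Sum>s\<in>U. u s * s e) = (\<Sum>s\<in>U. \<mu> * (if s \<in> Sy then uy s * s e else 0) + (1 - \<mu>) * (if s \<in> Sz then uz s * s e else 0))"
      by (rule sum.cong) (auto simp: u_def algebra_simps)
    also have "\<dots> = \<mu> * y e + (1 - \<mu>) * z e"
      unfolding sum.distrib sum_distrib_left[symmetric] r1 r2 using Y Z by simp
    finally show ?thesis by simp
  qed
  show ?thesis unfolding conv_hull_def
  proof (rule CollectI, rule exI[of _ U], rule exI[of _ u], intro conjI)
    show "finite U" by fact
    show "U \<subseteq> A" using Y Z U_def by auto
    show "\<forall>s\<in>U. 0 \<le> u s" using Y Z m unfolding u_def by auto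
    show "sum u U = 1" by fact
    show "(\<lambda>e. \<mu> * y e + (1 - \<mu>) * z e) = (\<lambda>e. \<Sum>s\<in>U. u s * s e)" using xe by auto
  qed
qed

lemma lin_sum: "(\<Sum>i\<in>I. \<Sum>s\<in>S. (u s::real) * g s i) = (\<Sum>s\<in>S. u s * (\<Sum>i\<in>I. g s i))"
  unfolding sum_distrib_left by (rule sum.swap)

lemma sum_char: "finite F \<Longrightarrow> sum (char_vec M) F = card (F \<inter> M)"
  using sum.inter_restrict[of F "\<lambda>_. 1::real" M] by (simp add: char_vec_def)

context nus begin

definition Sset where "Sset = {x :: 'v set \<Rightarrow> real.
       (\<forall>e. e \<notin> E \<longrightarrow> x e = 0) \<and> (\<forall>e\<in>E. 0 \<le> x e) \<and>
       (\<forall>v \<in> V1 \<union> V2. sum x (inc E v) \<le> 1) \<and>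
       (\<forall>e \<in> E1. x e + (\<Sum>v\<in>e. sum x (better E pref v e)) \<ge> 1) \<and>
       (\<forall>e \<in> E2. \<forall>v\<in>e. sum x (equiv_edges E pref v e) + (\<Sum>w\<in>e. sum x (better E pref w e)) \<ge> 1)}"

lemma S_D2: "x \<in> Sset \<Longrightarrow> e \<notin> E \<Longrightarrow> x e = 0" unfolding Sset_def by blast
lemma S_D1: "x \<in> Sset \<Longrightarrow> 0 \<le> x e"
proof (cases "e \<in> E")
  case True assume "x \<in> Sset" thus ?thesis using True unfolding Sset_def by blast
next
  case False assume "x \<in> Sset" thus ?thesis using S_D2[of x e] False by simp
qed
lemma S_D3: "x \<in> Sset \<Longrightarrow> v \<in> V \<Longrightarrow> sum x (inc E v) \<le> 1" unfolding Sset_def by blast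
lemma S_D4: "x \<in> Sset \<Longrightarrow> e \<in> E1 \<Longrightarrow> x e + (\<Sum>v\<in>e. sum x (B v e)) \<ge> 1" unfolding Sset_def by blast
lemma S_D5: "x \<in> Sset \<Longrightarrow> e \<in> E2 \<Longrightarrow> v \<in> e \<Longrightarrow> sum x (Q v e) + (\<Sum>w\<in>e. sum x (B w e)) \<ge> 1"
  unfolding Sset_def by blast
lemmas S_D = S_D1 S_D2 S_D3 S_D4 S_D5

lemma S_convex:
  assumes "\<forall>s\<in>Sx. s \<in> Sset" "finite Sx" "\<forall>s\<in>Sx. 0 \<le> u s" "sum u Sx = 1"
  shows "(\<lambda>e. \<Sum>s\<in>Sx. u s * s e) \<in> Sset"
proof -
  let ?x = "\<lambda>e. \<Sum>s\<in>Sx. u s * s e"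
  have sx: "sum ?x F = (\<Sum>s\<in>Sx. u s * sum s F)" for F using lin_sum[where I=F and S=Sx and u=u and g="\<lambda>s i. s i"] by simp
  have sx2: "(\<Sum>v\<in>e. sum ?x (H v)) = (\<Sum>s\<in>Sx. u s * (\<Sum>v\<in>e. sum s (H v)))" for e and H :: "'v \<Rightarrow> 'v set set"
    unfolding sx using lin_sum[where I=e and S=Sx and u=u and g="\<lambda>s v. sum s (H v)"] by simp
  have A: "s \<in> Sx \<Longrightarrow> s \<in> Sset" for s using assms by auto
  show ?thesis unfolding Sset_def
  proof (intro CollectI conjI ballI allI impI)
    fix e assume "e \<notin> E" thus "?x e = 0" using S_D(2)[OF A] by (intro sum.neutral) auto
  next
    fix e assume "e \<in> E" thus "0 \<le> ?x e" using S_D(1)[OF A] assms(3) by (intro sum_nonneg) auto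
  next
    fix v assume v: "v \<in> V1 \<union> V2"
    have "sum ?x (inc E v) \<le> (\<Sum>s\<in>Sx. u s * 1)" unfolding sx
      using S_D(3)[OF A] assms(3) v by (intro sum_mono mult_left_mono) auto
    thus "sum ?x (inc E v) \<le> 1" using assms(4) by simp
  next
    fix e assume e: "e \<in> E1"
    have "?x e + (\<Sum>v\<in>e. sum ?x (B v e)) = (\<Sum>s\<in>Sx. u s * (s e + (\<Sum>v\<in>e. sum s (B v e))))"
      unfolding sx2 by (simp add: sum.distrib algebra_simps)
    also have "\<dots> \<ge> (\<Sum>s\<in>Sx. u s * 1)"
      using S_D(4)[OF A] assms(3) e by (intro sum_mono mult_left_mono) auto
    finally show "1 \<le> ?x e + (\<Sum>v\<in>e. sum ?x (B v e))" using assms(4) by simp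
  next
    fix e v assume e: "e \<in> E2" "v \<in> e"
    have "sum ?x (Q v e) + (\<Sum>w\<in>e. sum ?x (B w e)) = (\<Sum>s\<in>Sx. u s * (sum s (Q v e) + (\<Sum>w\<in>e. sum s (B w e))))"
      unfolding sx2 sx[of "Q v e"] by (simp add: sum.distrib algebra_simps)
    also have "\<dots> \<ge> (\<Sum>s\<in>Sx. u s * 1)"
      using S_D(5)[OF A] assms(3) e by (intro sum_mono mult_left_mono) auto
    finally show "1 \<le> sum ?x (Q v e) + (\<Sum>w\<in>e. sum ?x (B w e))" using assms(4) by simp
  qed
qed

lemma inc_M: "M \<subseteq> E \<Longrightarrow> inc M v = inc E v \<inter> M" by (auto simp: inc_def)

lemma medge_eq: "matching E M \<Longrightarrow> f \<in> M \<Longrightarrow> v \<in> f \<Longrightarrow> medge M v = f"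
proof -
  assume m: "matching E M" and f: "f \<in> M" "v \<in> f"
  have fin: "finite (inc M v)" using m finE unfolding matching_def inc_def
    by (metis (no_types, lifting) finite_subset mem_Collect_eq subsetI)
  have c: "card (inc M v) \<le> 1" using m by (simp add: matching_def)
  have uniq: "g \<in> M \<Longrightarrow> v \<in> g \<Longrightarrow> g = f" for g
  proof -
    assume "g \<in> M" "v \<in> g"
    hence "{f, g} \<subseteq> inc M v" using f by (auto simp: inc_def)
    hence "card {f,g} \<le> 1" using c fin by (meson card_mono le_trans)
    thus "g = f" by (cases "g = f") auto
  qed
  have ex: "\<exists>e\<in>M. v \<in> e" using f by auto
  have "(THE e. e \<in> M \<and> v \<in> e) = f"
  proof (rule the_equality)
    show "f \<in> M \<and> v \<in> f" using f by simp
  next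
    fix e assume "e \<in> M \<and> v \<in> e" thus "e = f" using uniq by simp
  qed
  thus ?thesis unfolding medge_def using ex by simp
qed

lemma medge_cases: "matching E M \<Longrightarrow> medge M v = {} \<or> (medge M v \<in> M \<and> v \<in> medge M v)"
proof -
  assume m: "matching E M"
  show ?thesis
  proof (cases "\<exists>e\<in>M. v \<in> e")
    case True then obtain f where "f \<in> M" "v \<in> f" by auto
    thus ?thesis using medge_eq[OF m] by auto
  qed (auto simp: medge_def)
qed

lemma chi_S: assumes st: "nu_stable E E1 E2 pref M" shows "char_vec M \<in> Sset"
proof -
  have m: "matching E M" and ME: "M \<subseteq> E" using st by (auto simp: nu_stable_def matching_def)
  have finM: "finite M" using ME finE finite_subset by auto
  have ch: "sum (char_vec M) F = card (F \<inter> M)" if "F \<subseteq> E" for F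
    using sum_char[of F M] that finE finite_subset by blast
  have chge: "sum (char_vec M) F \<ge> 1" if "F \<subseteq> E" "f \<in> F" "f \<in> M" for F f
  proof -
    have "F \<inter> M \<noteq> {}" using that by auto
    moreover have "finite (F \<inter> M)" using finM by auto
    ultimately have "card (F \<inter> M) \<ge> 1" by (simp add: Suc_leI card_gt_0_iff)
    thus ?thesis using ch[OF that(1)] by simp
  qed
  have nn: "0 \<le> sum (char_vec M) F" for F by (intro sum_nonneg) (simp add: char_vec_def)
  have Bsum: "(\<Sum>w\<in>e. sum (char_vec M) (B w e)) \<ge> 1" if e: "e \<in> E" "w \<in> e" "\<not> pref w e (medge M w)" for e w
  proof -
    have einc: "e \<in> inc E w" using e by (simp add: inc_iff)
    have "medge M w \<noteq> {}" using e(3) pempty[OF einc] by auto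
    hence f: "medge M w \<in> M" "w \<in> medge M w" using medge_cases[OF m] by auto
    hence finc: "medge M w \<in> inc E w" using ME by (auto simp: inc_iff)
    have "strict_pref pref w (medge M w) e" using e(3) ptotal[OF einc finc] by (auto simp: strict_pref_def)
    hence "medge M w \<in> B w e" using finc by (simp add: mem_B)
    hence "1 \<le> sum (char_vec M) (B w e)" using chge[OF BQW_E(1) _ f(1)] by simp
    also have "\<dots> \<le> (\<Sum>w\<in>e. sum (char_vec M) (B w e))"
      using e(2) edge_form[OF e(1)] nn by (intro member_le_sum) auto
    finally show ?thesis .
  qed
  show ?thesis unfolding Sset_def
  proof (intro CollectI conjI ballI allI impI)
    fix e assume "e \<notin> E" thus "char_vec M e = 0" using ME by (auto simp: char_vec_def)
  next
    fix e show "0 \<le> char_vec M e" by (simp add: char_vec_def)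
  next
    fix v
    have "sum (char_vec M) (inc E v) = card (inc M v)" using ch[OF inc_sub] inc_M[OF ME] by simp
    thus "sum (char_vec M) (inc E v) \<le> 1" using m by (simp add: matching_def)
  next
    fix e assume e: "e \<in> E1"
    hence eE: "e \<in> E" using E12 by auto
    show "1 \<le> char_vec M e + (\<Sum>v\<in>e. sum (char_vec M) (B v e))"
    proof (cases "e \<in> M")
      case True thus ?thesis using nn by (simp add: char_vec_def sum_nonneg)
    next
      case False
      hence "\<not> weakly_blocks pref M e" using st e by (auto simp: nu_stable_def)
      then obtain w where "w \<in> e" "\<not> pref w e (medge M w)" using False by (auto simp: weakly_blocks_def)
      thus ?thesis using Bsum[OF eE] by (simp add: char_vec_def False)
    qed
  next
    fix e v assume e: "e \<in> E2" "v \<in> e"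
    hence eE: "e \<in> E" using E12 by auto
    have bnn: "0 \<le> (\<Sum>w\<in>e. sum (char_vec M) (B w e))" using nn by (simp add: sum_nonneg)
    show "1 \<le> sum (char_vec M) (Q v e) + (\<Sum>w\<in>e. sum (char_vec M) (B w e))"
    proof (cases "\<exists>w\<in>e. \<not> pref w e (medge M w)")
      case True
      then obtain w where "w \<in> e" "\<not> pref w e (medge M w)" by auto
      thus ?thesis using Bsum[OF eE] nn[of "Q v e"] by fastforce
    next
      case False
      hence allp: "\<forall>w\<in>e. pref w e (medge M w)" by auto
      have einc: "e \<in> inc E v" using e eE by (simp add: inc_iff)
      show ?thesis
      proof (cases "e \<in> M")
        case True
        hence "1 \<le> sum (char_vec M) (Q v e)" using chge[OF BQW_E(2) Q_refl[OF einc]] by simp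
        thus ?thesis using bnn by linarith
      next
        case eM: False
        hence "\<not> strongly_blocks pref M e" using st e by (auto simp: nu_stable_def)
        hence ns: "\<forall>w\<in>e. \<not> strict_pref pref w e (medge M w)"
          using allp eM by (auto simp: strongly_blocks_def weakly_blocks_def)
        have pv: "pref v (medge M v) e" using ns allp e(2) by (auto simp: strict_pref_def)
        have "medge M v \<noteq> {}" using pv pempty[OF einc] by auto
        hence f: "medge M v \<in> M" "v \<in> medge M v" using medge_cases[OF m] by auto
        hence finc: "medge M v \<in> inc E v" using ME by (auto simp: inc_iff)
        have "medge M v \<in> Q v e" using finc pv allp e(2) by (auto simp: mem_Q indiff_def)
        hence "1 \<le> sum (char_vec M) (Q v e)" using chge[OF BQW_E(2) _ f(1)] by simp
        thus ?thesis using bnn by linarith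
      qed
    qed
  qed
qed

lemma P_sub_S: "conv_hull {char_vec M | M. nu_stable E E1 E2 pref M} \<subseteq> Sset"
proof
  fix x assume "x \<in> conv_hull {char_vec M | M. nu_stable E E1 E2 pref M}"
  then obtain Sx u where X: "finite Sx" "Sx \<subseteq> {char_vec M | M. nu_stable E E1 E2 pref M}"
     "\<forall>s\<in>Sx. 0 \<le> u s" "sum u Sx = 1" "x = (\<lambda>e. \<Sum>s\<in>Sx. u s * s e)"
    unfolding conv_hull_def by blast
  have "\<forall>s\<in>Sx. s \<in> Sset" using X(2) chi_S by blast
  thus "x \<in> Sset" using S_convex X by blast
qed

end


context nus begin

lemma sq_identity:
  assumes "x \<in> Sset"
  shows "(sum x (inc E v))^2 = (\<Sum>e\<in>inc E v. x e * (2 * sum x (B v e) + sum x (Q v e)))"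
proof -
  let ?I = "inc E v"
  have "(sum x ?I)^2 = (\<Sum>e\<in>?I. x e * sum x ?I)" by (simp add: power2_eq_square sum_distrib_right)
  also have "\<dots> = (\<Sum>e\<in>?I. x e * (sum x (B v e) + sum x (Q v e) + sum x (W v e)))"
    by (rule sum.cong[OF refl]) (simp add: sum_part)
  also have "\<dots> = (\<Sum>e\<in>?I. x e * (sum x (B v e) + sum x (Q v e))) + (\<Sum>e\<in>?I. x e * sum x (W v e))"
    by (simp add: sum.distrib algebra_simps)
  also have "(\<Sum>e\<in>?I. x e * sum x (W v e)) = (\<Sum>e\<in>?I. x e * sum x (B v e))"
  proof -
    have "(\<Sum>e\<in>?I. x e * sum x (W v e)) = (\<Sum>e\<in>?I. \<Sum>f\<in>{f. f \<in> ?I \<and> strict_pref pref v e f}. x e * x f)"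
      by (simp add: W_def sum_distrib_left)
    also have "\<dots> = (\<Sum>f\<in>?I. \<Sum>e\<in>{e. e \<in> ?I \<and> strict_pref pref v e f}. x e * x f)"
      by (rule sum.swap_restrict[OF fin_inc fin_inc])
    also have "\<dots> = (\<Sum>f\<in>?I. x f * sum x (B v f))"
      by (simp add: better_def sum_distrib_left mult.commute)
    finally show ?thesis .
  qed
  finally show ?thesis by (simp add: algebra_simps sum.distrib sum_distrib_left)
qed

lemma sum2: "e \<in> E \<Longrightarrow> (\<Sum>v\<in>e. c) = 2 * (c::real)"
proof -
  assume "e \<in> E"
  then obtain a b where "e = {a,b}" "a \<noteq> b" using edge_form by blast
  thus ?thesis by simp
qed

lemma CS:
  assumes xS: "x \<in> Sset"
  shows "\<forall>v\<in>V. sum x (inc E v) = 0 \<or> sum x (inc E v) = 1"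
    and "\<forall>e\<in>E. x e > 0 \<longrightarrow> (\<forall>v\<in>e. sum x (Q v e) + (\<Sum>w\<in>e. sum x (B w e)) = 1)"
    and "\<forall>e\<in>E1. x e > 0 \<longrightarrow> (\<forall>v\<in>e. sum x (Q v e) = x e)"
proof -
  note D = S_D[OF xS]
  define Z where "Z v = sum x (inc E v)" for v
  define K where "K e = (if e \<in> E1 then x e + (\<Sum>v\<in>e. sum x (B v e))
     else (\<Sum>v\<in>e. sum x (Q v e)) / 2 + (\<Sum>v\<in>e. sum x (B v e)))" for e
  define k where "k v e = (if e \<in> E1 then x e / 2 else sum x (Q v e) / 2) + sum x (B v e)" for v e
  define T1 where "T1 e = x e * (K e - 1)" for e
  define T2 where "T2 v e = x e * (sum x (Q v e) / 2 + sum x (B v e) - k v e)" for v e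
  define T3 where "T3 v = (Z v - (Z v)^2) / 2" for v
  have Kk: "K e = (\<Sum>v\<in>e. k v e)" if "e \<in> E" for e
    using that sum2[OF that] by (simp add: K_def k_def sum.distrib sum_divide_distrib)
  have Qsum_nn: "0 \<le> sum x F" for F using D(1) by (simp add: sum_nonneg)
  have K1: "K e \<ge> 1" if e: "e \<in> E" for e
  proof (cases "e \<in> E1")
    case True thus ?thesis using D(4) by (simp add: K_def)
  next
    case False
    hence e2: "e \<in> E2" using E12 e by auto
    obtain a b where ab: "e = {a,b}" "a \<noteq> b" using edge_form[OF e] by auto
    have "1 \<le> sum x (Q a e) + (\<Sum>w\<in>e. sum x (B w e))" "1 \<le> sum x (Q b e) + (\<Sum>w\<in>e. sum x (B w e))"
      using D(5)[OF e2] ab by auto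
    thus ?thesis using False ab by (simp add: K_def add_divide_distrib)
  qed
  have T1nn: "T1 e \<ge> 0" if "e \<in> E" for e using K1[OF that] D(1) by (simp add: T1_def)
  have T2nn: "T2 v e \<ge> 0" if "e \<in> inc E v" for v e
  proof -
    have "x e \<le> sum x (Q v e)" using Q_refl[OF that] D(1) fin_BQW by (intro member_le_sum) auto
    thus ?thesis using D(1) by (simp add: T2_def k_def)
  qed
  have T3nn: "T3 v \<ge> 0" if "v \<in> V" for v
  proof -
    have "0 \<le> Z v" "Z v \<le> 1" using D(3)[OF that] Qsum_nn by (auto simp: Z_def)
    hence "Z v * Z v \<le> Z v * 1" by (intro mult_left_mono) auto
    thus ?thesis unfolding T3_def by (simp add: power2_eq_square)
  qed
  have s1: "(\<Sum>e\<in>E. T1 e) = (\<Sum>e\<in>E. x e * K e) - sum x E"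
    by (simp add: T1_def algebra_simps sum_subtractf)
  have xk: "(\<Sum>e\<in>E. x e * K e) = (\<Sum>v\<in>V. \<Sum>e\<in>inc E v. x e * k v e)"
    unfolding dc by (rule sum.cong[OF refl]) (simp add: Kk sum_distrib_left)
  have s2: "(\<Sum>v\<in>V. \<Sum>e\<in>inc E v. T2 v e) = (\<Sum>v\<in>V. (Z v)^2 / 2) - (\<Sum>e\<in>E. x e * K e)"
  proof -
    have "(\<Sum>v\<in>V. \<Sum>e\<in>inc E v. T2 v e) = (\<Sum>v\<in>V. (\<Sum>e\<in>inc E v. x e * (2 * sum x (B v e) + sum x (Q v e))) / 2 - (\<Sum>e\<in>inc E v. x e * k v e))"
    proof (rule sum.cong[OF refl])
      fix v
      have pt: "T2 v e = (x e * (2 * sum x (B v e) + sum x (Q v e))) / 2 - x e * k v e" for e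
        unfolding T2_def by (simp add: field_simps)
      show "(\<Sum>e\<in>inc E v. T2 v e) = (\<Sum>e\<in>inc E v. x e * (2 * sum x (B v e) + sum x (Q v e))) / 2 - (\<Sum>e\<in>inc E v. x e * k v e)"
        unfolding pt by (simp only: sum_subtractf sum_divide_distrib)
    qed
    also have "\<dots> = (\<Sum>v\<in>V. (Z v)^2 / 2) - (\<Sum>e\<in>E. x e * K e)"
      unfolding xk Z_def sq_identity[OF xS] by (simp add: sum_subtractf)
    finally show ?thesis .
  qed
  have s3: "(\<Sum>v\<in>V. T3 v) = sum x E - (\<Sum>v\<in>V. (Z v)^2 / 2)"
  proof -
    have "(\<Sum>v\<in>V. Z v) = (\<Sum>e\<in>E. \<Sum>v\<in>e. x e)" unfolding Z_def by (rule dc)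
    also have "\<dots> = (\<Sum>e\<in>E. 2 * x e)" by (rule sum.cong[OF refl]) (erule sum2)
    finally have "(\<Sum>v\<in>V. Z v) = 2 * sum x E" by (simp add: sum_distrib_left)
    thus ?thesis by (simp add: T3_def sum_subtractf sum_divide_distrib[symmetric])
  qed
  have tot: "(\<Sum>e\<in>E. T1 e) + (\<Sum>v\<in>V. \<Sum>e\<in>inc E v. T2 v e) + (\<Sum>v\<in>V. T3 v) = 0"
    using s1 s2 s3 by simp
  have n1: "(\<Sum>e\<in>E. T1 e) \<ge> 0" using T1nn by (intro sum_nonneg) auto
  have n2: "(\<Sum>v\<in>V. \<Sum>e\<in>inc E v. T2 v e) \<ge> 0" using T2nn by (intro sum_nonneg) auto
  have n3: "(\<Sum>v\<in>V. T3 v) \<ge> 0" using T3nn by (intro sum_nonneg) auto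
  have z1: "(\<Sum>e\<in>E. T1 e) = 0" and z2: "(\<Sum>v\<in>V. \<Sum>e\<in>inc E v. T2 v e) = 0" and z3: "(\<Sum>v\<in>V. T3 v) = 0"
    using tot n1 n2 n3 by linarith+
  have t1: "T1 e = 0" if "e \<in> E" for e using z1 sum_nonneg_eq_0_iff[OF finE, where f=T1] T1nn that by blast
  have t3: "T3 v = 0" if "v \<in> V" for v using z3 sum_nonneg_eq_0_iff[OF finV, where f=T3] T3nn that by blast
  have t2: "T2 v e = 0" if "v \<in> V" "e \<in> inc E v" for v e
  proof -
    have "(\<Sum>e\<in>inc E v. T2 v e) = 0"
      using z2 sum_nonneg_eq_0_iff[OF finV, where f="\<lambda>v. \<Sum>e\<in>inc E v. T2 v e"] T2nn that(1)
      by (simp add: sum_nonneg)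
    thus ?thesis using sum_nonneg_eq_0_iff[OF fin_inc[of v], where f="T2 v"] T2nn that(2) by blast
  qed
  show "\<forall>v\<in>V. sum x (inc E v) = 0 \<or> sum x (inc E v) = 1"
  proof
    fix v assume "v \<in> V"
    hence "Z v - (Z v)^2 = 0" using t3 by (simp add: T3_def)
    hence "Z v * (1 - Z v) = 0" by (simp add: power2_eq_square algebra_simps)
    thus "sum x (inc E v) = 0 \<or> sum x (inc E v) = 1" by (simp add: Z_def)
  qed
  have E1Q: "\<forall>e\<in>E1. x e > 0 \<longrightarrow> (\<forall>v\<in>e. sum x (Q v e) = x e)"
  proof (intro ballI impI)
    fix e v assume e: "e \<in> E1" "x e > 0" "v \<in> e"
    hence ei: "e \<in> inc E v" using E12 by (auto simp: inc_iff)
    have "T2 v e = 0" using t2[OF incV[OF ei] ei] .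
    thus "sum x (Q v e) = x e" using e by (simp add: T2_def k_def)
  qed
  thus "\<forall>e\<in>E1. x e > 0 \<longrightarrow> (\<forall>v\<in>e. sum x (Q v e) = x e)" .
  show "\<forall>e\<in>E. x e > 0 \<longrightarrow> (\<forall>v\<in>e. sum x (Q v e) + (\<Sum>w\<in>e. sum x (B w e)) = 1)"
  proof (intro ballI impI)
    fix e v assume e: "e \<in> E" "x e > 0" "v \<in> e"
    have Ke: "K e = 1" using t1[OF e(1)] e(2) by (simp add: T1_def)
    show "sum x (Q v e) + (\<Sum>w\<in>e. sum x (B w e)) = 1"
    proof (cases "e \<in> E1")
      case True thus ?thesis using Ke E1Q e by (simp add: K_def)
    next
      case False
      hence e2: "e \<in> E2" using E12 e by auto
      obtain a b where ab: "e = {a,b}" "a \<noteq> b" using edge_form[OF e(1)] by auto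
      have h1: "1 \<le> sum x (Q a e) + (\<Sum>w\<in>e. sum x (B w e))" and h2: "1 \<le> sum x (Q b e) + (\<Sum>w\<in>e. sum x (B w e))"
        using D(5)[OF e2] ab by auto
      have h3: "(sum x (Q a e) + sum x (Q b e))/2 + (\<Sum>w\<in>e. sum x (B w e)) = 1"
        using Ke False unfolding K_def using ab by simp
      have h4: "sum x (Q a e) + sum x (Q b e) + 2 * (\<Sum>w\<in>e. sum x (B w e)) = 2"
        using h3 by (simp add: field_simps)
      have "v = a \<or> v = b" using e(3) ab by auto
      thus ?thesis
      proof
        assume va: "v = a" show ?thesis unfolding va using h1 h2 h4 by linarith
      next
        assume vb: "v = b" show ?thesis unfolding vb using h1 h2 h4 by linarith
      qed
    qed
  qed
qed

end


context nus begin

definition pos :: "('v set \<Rightarrow> real) \<Rightarrow> 'v set set" where "pos x = {e \<in> E. 0 < x e}"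
definition bal :: "('v set \<Rightarrow> real) \<Rightarrow> bool" where "bal d \<longleftrightarrow> (\<forall>v e. e \<in> inc E v \<longrightarrow> sum d (Q v e) = 0)"

lemma fin_pos: "finite (pos x)" using finE by (simp add: pos_def)

lemma closed_sum:
  assumes bd: "bal d" and F: "F \<subseteq> inc E v" "\<forall>f\<in>F. Q v f \<subseteq> F"
  shows "sum d F = 0"
proof -
  have "finite F" using F fin_inc finite_subset by blast
  thus ?thesis using F
  proof (induction F rule: finite_psubset_induct)
    case (psubset F)
    show ?case
    proof (cases "F = {}")
      case False
      then obtain f where f: "f \<in> F" by auto
      have finc: "f \<in> inc E v" using f psubset.prems by auto
      have QF: "Q v f \<subseteq> F" using f psubset.prems by auto
      have fQ: "f \<in> Q v f" using Q_refl[OF finc] .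
      have sub: "F - Q v f \<subset> F" using f fQ by auto
      have cl: "\<forall>g\<in>F - Q v f. Q v g \<subseteq> F - Q v f"
      proof (intro ballI subsetI)
        fix g h assume g: "g \<in> F - Q v f" and h: "h \<in> Q v g"
        have ginc: "g \<in> inc E v" using g psubset.prems by auto
        have "h \<in> F" using g h psubset.prems by auto
        moreover have "h \<notin> Q v f"
        proof
          assume "h \<in> Q v f"
          hence "Q v h = Q v f" using Q_eq finc by blast
          moreover have "Q v h = Q v g" using Q_eq[OF h ginc] .
          ultimately show False using g Q_refl[OF ginc] by auto
        qed
        ultimately show "h \<in> F - Q v f" by auto
      qed
      have IH: "sum d (F - Q v f) = 0" using psubset.IH[OF sub] psubset.prems cl by auto
      have "sum d F = sum d (Q v f) + sum d (F - Q v f)"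
        using sum.subset_diff[OF QF] psubset.hyps by (simp add: add.commute)
      thus ?thesis using IH bd finc by (simp add: bal_def)
    qed simp
  qed
qed

lemma bal_inc: "bal d \<Longrightarrow> sum d (inc E v) = 0"
  by (rule closed_sum) (auto simp: mem_Q)
lemma bal_B: "bal d \<Longrightarrow> e \<in> inc E v \<Longrightarrow> sum d (B v e) = 0"
  by (rule closed_sum) (auto simp: mem_Q mem_B indiff_def intro: st2)
lemma bal_Q: "bal d \<Longrightarrow> e \<in> inc E v \<Longrightarrow> sum d (Q v e) = 0"
  by (simp add: bal_def)

lemma perturb:
  assumes xS: "x \<in> Sset" and bd: "bal d" and d1: "\<forall>e\<in>E1. d e = 0" and dE: "\<forall>e. e \<notin> E \<longrightarrow> d e = 0"
    and nn: "\<forall>e. 0 \<le> x e + d e"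
  shows "(\<lambda>e. x e + d e) \<in> Sset"
proof -
  note D = S_D[OF xS]
  have sB: "(\<Sum>w\<in>e. sum (\<lambda>e. x e + d e) (B w e)) = (\<Sum>w\<in>e. sum x (B w e))" if "e \<in> E" for e
  proof -
    have "(\<Sum>w\<in>e. sum (\<lambda>e. x e + d e) (B w e)) = (\<Sum>w\<in>e. sum x (B w e)) + (\<Sum>w\<in>e. sum d (B w e))"
      by (simp add: sum.distrib)
    moreover have "(\<Sum>w\<in>e. sum d (B w e)) = 0"
      using that bal_B[OF bd] by (intro sum.neutral) (auto simp: inc_iff)
    ultimately show ?thesis by simp
  qed
  show ?thesis unfolding Sset_def
  proof (intro CollectI conjI ballI allI impI)
    fix e assume "e \<notin> E" thus "x e + d e = 0" using D dE by auto
  next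
    fix e show "0 \<le> x e + d e" using nn by auto
  next
    fix v assume "v \<in> V1 \<union> V2"
    thus "sum (\<lambda>e. x e + d e) (inc E v) \<le> 1" using D(3) bal_inc[OF bd] by (simp add: sum.distrib)
  next
    fix e assume e: "e \<in> E1"
    hence "e \<in> E" using E12 by auto
    thus "1 \<le> x e + d e + (\<Sum>v\<in>e. sum (\<lambda>e. x e + d e) (B v e))" using sB D(4)[OF e] d1 e by simp
  next
    fix e v assume e: "e \<in> E2" "v \<in> e"
    hence eE: "e \<in> E" using E12 by auto
    hence "sum (\<lambda>e. x e + d e) (Q v e) = sum x (Q v e)"
      using bal_Q[OF bd] e by (simp add: sum.distrib inc_iff)
    thus "1 \<le> sum (\<lambda>e. x e + d e) (Q v e) + (\<Sum>w\<in>e. sum (\<lambda>e. x e + d e) (B w e))"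
      using sB[OF eE] D(5)[OF e] by simp
  qed
qed

lemma one_dir:
  assumes xS: "x \<in> Sset" and bd: "bal d" and sup: "\<forall>e. d e \<noteq> 0 \<longrightarrow> 0 < x e \<and> e \<in> E2"
    and neg: "\<exists>e. d e < 0"
  shows "\<exists>t>0. (\<lambda>e. x e + t * d e) \<in> Sset \<and> card (pos (\<lambda>e. x e + t * d e)) < card (pos x)"
proof -
  note D = S_D[OF xS]
  have dE: "\<forall>e. e \<notin> E \<longrightarrow> d e = 0" using sup D(2) by force
  define N where "N = {e \<in> E. d e < 0}"
  have finN: "finite N" using finE N_def by auto
  have Nne: "N \<noteq> {}" using neg dE N_def by force
  define t where "t = Min ((\<lambda>e. x e / (- d e)) ` N)"
  have "t \<in> (\<lambda>e. x e / (- d e)) ` N" unfolding t_def by (rule Min_in) (use finN Nne in auto)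
  then obtain e1 where e1: "e1 \<in> N" "t = x e1 / (- d e1)" by blast
  have tle: "t \<le> x e / (- d e)" if "e \<in> N" for e unfolding t_def by (rule Min_le) (use finN that in auto)
  have x1: "x e1 > 0" "d e1 < 0" using e1 sup N_def by auto
  have tpos: "t > 0" using e1 x1 by (simp add: divide_pos_neg)
  let ?y = "\<lambda>e. x e + t * d e"
  have nn: "0 \<le> x e + t * d e" for e
  proof (cases "d e < 0")
    case True
    hence "e \<in> N" using dE N_def by force
    hence "t \<le> x e / (- d e)" by (rule tle)
    moreover have nd: "0 < - d e" using True by simp
    ultimately have "t * (- d e) \<le> x e" using pos_le_divide_eq[OF nd] by blast
    thus ?thesis by simp
  next
    case False thus ?thesis using D(1)[of e] tpos by simp
  qed
  have bd': "bal (\<lambda>e. t * d e)" using bd by (simp add: bal_def sum_distrib_left[symmetric])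
  have yS: "?y \<in> Sset"
    by (rule perturb[OF xS bd']) (use sup dE E12 nn in auto)
  have "pos ?y \<subseteq> pos x - {e1}"
  proof
    fix e assume e: "e \<in> pos ?y"
    have "e \<noteq> e1" using e x1 e1 by (auto simp: pos_def)
    moreover have "0 < x e"
    proof (cases "d e = 0")
      case True thus ?thesis using e by (simp add: pos_def)
    next
      case False thus ?thesis using sup by auto
    qed
    ultimately show "e \<in> pos x - {e1}" using e by (auto simp: pos_def)
  qed
  moreover have "e1 \<in> pos x" using x1 e1 N_def by (auto simp: pos_def)
  ultimately have "pos ?y \<subset> pos x" by auto
  hence "card (pos ?y) < card (pos x)" using fin_pos psubset_card_mono by blast
  thus ?thesis using yS tpos by blast
qed

lemma caseA:
  assumes xS: "x \<in> Sset" and bd: "bal d" and sup: "\<forall>e. d e \<noteq> 0 \<longrightarrow> 0 < x e \<and> e \<in> E2"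
    and nz: "\<exists>e. d e \<noteq> 0"
  shows "\<exists>y z \<mu>. y \<in> Sset \<and> z \<in> Sset \<and> card (pos y) < card (pos x) \<and> card (pos z) < card (pos x)
     \<and> 0 \<le> \<mu> \<and> \<mu> \<le> 1 \<and> x = (\<lambda>e. \<mu> * y e + (1 - \<mu>) * z e)"
proof -
  note D = S_D[OF xS]
  have dE: "\<forall>e. e \<notin> E \<longrightarrow> d e = 0" using sup D(2) by force
  have opp: "\<exists>f. d f < 0" if "bal d" "\<forall>e. e \<notin> E \<longrightarrow> d e = 0" "d e > 0" for d :: "'v set \<Rightarrow> real" and e
  proof -
    have eE: "e \<in> E"
    proof (rule ccontr)
      assume "e \<notin> E" hence "d e = 0" using that(2) by blast
      thus False using that(3) by simp
    qed
    then obtain v where v: "v \<in> e" using edge_ne by auto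
    have ei: "e \<in> inc E v" using eE v by (simp add: inc_iff)
    have s0: "sum d (inc E v) = 0" using bal_inc[OF that(1)] .
    show ?thesis
    proof (rule ccontr)
      assume "\<nexists>f. d f < 0"
      hence "\<forall>f. 0 \<le> d f" by (simp add: not_less)
      hence "d e \<le> sum d (inc E v)" using ei fin_inc by (intro member_le_sum) auto
      thus False using s0 that by simp
    qed
  qed
  have bdm: "bal (\<lambda>e. - d e)" using bd by (simp add: bal_def sum_negf)
  obtain e0 where e0: "d e0 \<noteq> 0" using nz by auto
  have negs: "(\<exists>e. d e < 0) \<and> (\<exists>e. - d e < 0)"
  proof (cases "d e0 > 0")
    case True
    thus ?thesis using opp[OF bd dE True] by auto
  next
    case False
    hence m0: "- d e0 > 0" using e0 by auto
    have dE': "\<forall>e. e \<notin> E \<longrightarrow> - d e = 0" using dE by simp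
    have "\<exists>f. - d f < 0" using opp[OF bdm dE' m0] .
    moreover have "d e0 < 0" using m0 by simp
    ultimately show ?thesis by auto
  qed
  obtain t1 where t1: "t1 > 0" "(\<lambda>e. x e + t1 * d e) \<in> Sset" "card (pos (\<lambda>e. x e + t1 * d e)) < card (pos x)"
    using one_dir[OF xS bd sup] negs by blast
  obtain t2 where t2: "t2 > 0" "(\<lambda>e. x e + t2 * - d e) \<in> Sset" "card (pos (\<lambda>e. x e + t2 * - d e)) < card (pos x)"
    using one_dir[OF xS bdm] sup negs by force
  define \<mu> where "\<mu> = t2 / (t1 + t2)"
  have "x = (\<lambda>e. \<mu> * (x e + t1 * d e) + (1 - \<mu>) * (x e + t2 * - d e))"
  proof
    fix e
    have eq: "\<mu> * t1 = (1 - \<mu>) * t2" using t1 t2 unfolding \<mu>_def by (simp add: field_simps)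
    have "\<mu> * (x e + t1 * d e) + (1 - \<mu>) * (x e + t2 * - d e) = x e + (\<mu> * t1 - (1 - \<mu>) * t2) * d e"
      by (simp add: algebra_simps)
    thus "x e = \<mu> * (x e + t1 * d e) + (1 - \<mu>) * (x e + t2 * - d e)" using eq by simp
  qed
  moreover have "0 \<le> \<mu>" "\<mu> \<le> 1" using t1 t2 by (auto simp: \<mu>_def)
  ultimately show ?thesis using t1 t2 by blast
qed

end


context nus begin


lemma sum_pos_part: "(\<forall>e. 0 \<le> x e) \<Longrightarrow> F \<subseteq> E \<Longrightarrow> sum x F = sum x (F \<inter> pos x)"
proof -
  assume nn: "\<forall>e. 0 \<le> x e" and F: "F \<subseteq> E"
  have fin: "finite F" using F finE finite_subset by auto
  show ?thesis
  proof (rule sum.mono_neutral_right[OF fin])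
    show "F \<inter> pos x \<subseteq> F" by blast
    show "\<forall>i\<in>F - F \<inter> pos x. x i = 0"
    proof
      fix i assume i: "i \<in> F - F \<inter> pos x"
      hence "\<not> 0 < x i" using F by (auto simp: pos_def)
      thus "x i = 0" using nn by (metis less_eq_real_def)
    qed
  qed
qed

lemma two_pos_gt:
  assumes nn: "\<forall>e. 0 \<le> x e" and F: "F \<subseteq> E" and e: "e \<in> F \<inter> pos x" and c: "2 \<le> card (F \<inter> pos x)"
  shows "x e < sum x F"
proof -
  have fin: "finite (F \<inter> pos x)" using fin_pos by auto
  obtain f where f: "f \<in> F \<inter> pos x" "f \<noteq> e"
  proof -
    have "F \<inter> pos x - {e} \<noteq> {}"
    proof
      assume "F \<inter> pos x - {e} = {}"
      hence "F \<inter> pos x \<subseteq> {e}" by auto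
      hence "card (F \<inter> pos x) \<le> 1" by (metis card.empty card.insert card_mono finite.intros(1) empty_iff finite_insert One_nat_def)
      thus False using c by simp
    qed
    thus ?thesis using that by auto
  qed
  have "x e + x f = sum x {e, f}" using f by simp
  also have "\<dots> \<le> sum x (F \<inter> pos x)" using e f fin nn by (intro sum_mono2) auto
  also have "\<dots> = sum x F" using sum_pos_part[OF nn F] by simp
  finally show ?thesis using f by (simp add: pos_def)
qed

lemma split_lemma:
  assumes xS: "x \<in> Sset"
    and noA: "\<not> (\<exists>d. bal d \<and> (\<forall>e. d e \<noteq> 0 \<longrightarrow> 0 < x e \<and> e \<in> E2) \<and> (\<exists>e. d e \<noteq> 0))"
  shows "\<forall>e v. e \<in> pos x \<longrightarrow> v \<in> e \<longrightarrow> Q v e \<inter> pos x = {e}"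
proof (rule ccontr)
  note D = S_D[OF xS]
  note cs = CS[OF xS]
  have nn: "\<forall>e. 0 \<le> x e" using D by auto
  have QE: "Q v e \<subseteq> E" for v e by (rule BQW_E)
  have finQ: "finite (Q v e \<inter> pos x)" for v e using fin_pos by auto
  have big_gt: "x f < sum x (Q v f)" if "f \<in> pos x" "2 \<le> card (Q v f \<inter> pos x)" "v \<in> f" for f v
  proof -
    have "f \<in> inc E v" using that by (auto simp: pos_def inc_iff)
    hence "f \<in> Q v f \<inter> pos x" using Q_refl that by auto
    thus ?thesis using two_pos_gt[OF nn QE] that by auto
  qed
  have notE1: "f \<notin> E1" if "f \<in> pos x" "v \<in> f" "2 \<le> card (Q v f \<inter> pos x)" for f v
    using big_gt[OF that(1,3,2)] cs(3) that by (auto simp: pos_def)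
  assume "\<not> (\<forall>e v. e \<in> pos x \<longrightarrow> v \<in> e \<longrightarrow> Q v e \<inter> pos x = {e})"
  then obtain e0 v0 where e0: "e0 \<in> pos x" "v0 \<in> e0" "Q v0 e0 \<inter> pos x \<noteq> {e0}" by blast
  have e0inc: "e0 \<in> inc E v0" using e0 by (auto simp: pos_def inc_iff)
  have e0Q: "e0 \<in> Q v0 e0 \<inter> pos x" using Q_refl[OF e0inc] e0 by auto
  have c0: "2 \<le> card (Q v0 e0 \<inter> pos x)"
  proof -
    obtain f where "f \<in> Q v0 e0 \<inter> pos x" "f \<noteq> e0" using e0 e0Q by blast
    hence "{e0, f} \<subseteq> Q v0 e0 \<inter> pos x" using e0Q by auto
    hence "card {e0, f} \<le> card (Q v0 e0 \<inter> pos x)" by (rule card_mono[OF finQ])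
    thus ?thesis using \<open>f \<noteq> e0\<close> by simp
  qed
  define N' where "N' = {e \<in> pos x \<inter> E2. \<exists>v\<in>e. 2 \<le> card (Q v e \<inter> pos x)}"
  have finN': "finite N'" using fin_pos N'_def by auto
  have e0N: "e0 \<in> N'"
  proof -
    have "e0 \<notin> E1" using notE1[OF e0(1,2) c0] .
    moreover have "e0 \<in> E" using e0(1) by (simp add: pos_def)
    ultimately have "e0 \<in> E2" using E12(2) by blast
    thus ?thesis using e0(1,2) c0 unfolding N'_def by blast
  qed
  have c1: "2 \<le> card (Q v e \<inter> pos x)" if e: "e \<in> N'" "v \<in> e" for e v
  proof (rule ccontr)
    assume nc: "\<not> 2 \<le> card (Q v e \<inter> pos x)"
    obtain u where u: "u \<in> e" "2 \<le> card (Q u e \<inter> pos x)" using e by (auto simp: N'_def)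
    have ep: "e \<in> pos x" using e by (auto simp: N'_def)
    have eE: "e \<in> E" using ep by (simp add: pos_def)
    have einc: "e \<in> inc E v" using eE e by (simp add: inc_iff)
    have "Q v e \<inter> pos x \<subseteq> {e}"
    proof
      fix f assume f: "f \<in> Q v e \<inter> pos x"
      show "f \<in> {e}"
      proof (rule ccontr)
        assume "f \<notin> {e}"
        hence "{e, f} \<subseteq> Q v e \<inter> pos x" using f Q_refl[OF einc] ep by auto
        hence "card {e,f} \<le> card (Q v e \<inter> pos x)" by (rule card_mono[OF finQ])
        thus False using nc \<open>f \<notin> {e}\<close> by simp
      qed
    qed
    hence "sum x (Q v e \<inter> pos x) \<le> sum x {e}" using nn by (intro sum_mono2) auto
    hence "sum x (Q v e \<inter> pos x) \<le> x e" by simp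
    hence sv: "sum x (Q v e) \<le> x e" using sum_pos_part[OF nn QE] by simp
    have su: "x e < sum x (Q u e)" using big_gt[OF ep u(2) u(1)] .
    have "sum x (Q v e) + (\<Sum>w\<in>e. sum x (B w e)) = 1" "sum x (Q u e) + (\<Sum>w\<in>e. sum x (B w e)) = 1"
      using cs(2) eE ep e(2) u(1) by (auto simp: pos_def)
    thus False using sv su by simp
  qed
  have c2: "f \<in> N'" if e: "e \<in> N'" "v \<in> e" "f \<in> Q v e \<inter> pos x" for e v f
  proof -
    have eE: "e \<in> E" using e by (auto simp: N'_def pos_def)
    have einc: "e \<in> inc E v" using eE e by (simp add: inc_iff)
    have finc: "f \<in> inc E v" using e(3) by (simp add: mem_Q)
    have Qf: "Q v f = Q v e" using Q_eq e(3) einc by blast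
    have cf: "2 \<le> card (Q v f \<inter> pos x)" using c1[OF e(1,2)] Qf by simp
    have vf: "v \<in> f" using finc by (simp add: inc_iff)
    have "f \<notin> E1" using notE1[OF _ vf cf] e(3) by auto
    moreover have fE: "f \<in> E" using finc by (simp add: inc_iff)
    ultimately have "f \<in> E2" using E12(2) by blast
    thus ?thesis using e(3) vf cf by (auto simp: N'_def)
  qed
  define Nd where "Nd = (\<lambda>p. (snd p, Q (snd p) (fst p))) ` (SIGMA e:N'. e)"
  have finNd: "finite Nd" unfolding Nd_def
    using finN' edge_form N'_def by (intro finite_imageI finite_SigmaI) (auto simp: pos_def)
  have Nd_mem: "n \<in> Nd \<longleftrightarrow> (\<exists>e v. e \<in> N' \<and> v \<in> e \<and> n = (v, Q v e))" for n
    unfolding Nd_def by force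
  have N'E: "e \<in> E" if "e \<in> N'" for e using that by (auto simp: N'_def pos_def)
  have nodes_of: "{n \<in> Nd. e \<in> snd n} = {(v, Q v e) | v. v \<in> e}" if e: "e \<in> N'" for e
  proof (intro set_eqI iffI)
    fix n assume "n \<in> {n \<in> Nd. e \<in> snd n}"
    then obtain e' v where n: "e' \<in> N'" "v \<in> e'" "n = (v, Q v e')" "e \<in> Q v e'" using Nd_mem by auto
    have "e' \<in> inc E v" using n N'E by (simp add: inc_iff)
    hence "Q v e = Q v e'" using Q_eq n(4) by blast
    moreover have "v \<in> e" using n(4) by (simp add: mem_Q inc_iff)
    ultimately show "n \<in> {(v, Q v e) | v. v \<in> e}" using n by auto
  next
    fix n assume "n \<in> {(v, Q v e) | v. v \<in> e}"
    then obtain v where n: "v \<in> e" "n = (v, Q v e)" by auto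
    have "e \<in> inc E v" using n N'E[OF e] by (simp add: inc_iff)
    thus "n \<in> {n \<in> Nd. e \<in> snd n}" using n e Nd_mem Q_refl by auto
  qed
  have node_sub: "snd n \<inter> pos x \<subseteq> N'" if "n \<in> Nd" for n
    using that Nd_mem c2 by auto
  have node_card: "2 \<le> card (snd n \<inter> N')" if nN: "n \<in> Nd" for n
  proof -
    obtain e v where ev: "e \<in> N'" "v \<in> e" "n = (v, Q v e)" using nN Nd_mem[of n] by blast
    have "snd n \<inter> N' = snd n \<inter> pos x" using node_sub[OF nN] N'_def by auto
    thus ?thesis using c1[OF ev(1,2)] ev(3) by simp
  qed
  have dcount: "(\<Sum>n\<in>Nd. \<Sum>y\<in>{y. y \<in> N' \<and> y \<in> snd n}. g n y) = (\<Sum>y\<in>N'. \<Sum>n\<in>{n. n \<in> Nd \<and> y \<in> snd n}. g n y)" for g :: "_ \<Rightarrow> _ \<Rightarrow> real"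
    by (rule sum.swap_restrict[OF finNd finN'])
  have twoends: "\<exists>a b. a \<in> V1 \<and> b \<in> V2 \<and> a \<noteq> b \<and> {n \<in> Nd. y \<in> snd n} = {(a, Q a y), (b, Q b y)}" if yN: "y \<in> N'" for y
  proof -
    obtain a b where ab: "a \<in> V1" "b \<in> V2" "y = {a,b}" "a \<noteq> b" using edge_form N'E[OF yN] by blast
    have "{n \<in> Nd. y \<in> snd n} = {(a, Q a y), (b, Q b y)}" using nodes_of[OF yN] ab by auto
    thus ?thesis using ab by blast
  qed
  have "(\<Sum>n\<in>Nd. real (card (snd n \<inter> N'))) = (\<Sum>n\<in>Nd. \<Sum>y\<in>{y. y \<in> N' \<and> y \<in> snd n}. 1)"
    by (rule sum.cong[OF refl]) (simp add: Int_def conj_commute)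
  also have "\<dots> = (\<Sum>y\<in>N'. \<Sum>n\<in>{n. n \<in> Nd \<and> y \<in> snd n}. 1)" by (rule dcount)
  also have "\<dots> = (\<Sum>y\<in>N'. 2)"
  proof (rule sum.cong[OF refl])
    fix y assume "y \<in> N'"
    then obtain a b where "a \<noteq> b" "{n \<in> Nd. y \<in> snd n} = {(a, Q a y), (b, Q b y)}" using twoends by blast
    thus "(\<Sum>n\<in>{n. n \<in> Nd \<and> y \<in> snd n}. 1::real) = 2" by simp
  qed
  finally have cnt: "(\<Sum>n\<in>Nd. real (card (snd n \<inter> N'))) = 2 * card N'" by simp
  have "(\<Sum>n\<in>Nd. 2::real) \<le> (\<Sum>n\<in>Nd. real (card (snd n \<inter> N')))"
    using node_card by (intro sum_mono) auto
  hence cardle: "card Nd \<le> card N'" using cnt by simp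
  have "(v0, Q v0 e0) \<in> Nd" using Nd_mem[of "(v0, Q v0 e0)"] e0N e0(2) by blast
  then obtain n0 where n0: "n0 \<in> Nd" by blast
  define J where "J = Nd - {n0}"
  have cJ: "card J < card N'" unfolding J_def using card_Diff1_less[OF finNd n0] cardle by linarith
  obtain d :: "'v set \<Rightarrow> real" where d: "\<forall>y. y \<notin> N' \<longrightarrow> d y = 0" "\<exists>y\<in>N'. d y \<noteq> 0"
     "\<forall>j\<in>J. (\<Sum>y\<in>N'. (if y \<in> snd j then 1 else 0) * d y) = 0"
    using linalg[OF _ finN' cJ, where c="\<lambda>j y. if y \<in> snd j then 1 else 0"] finNd unfolding J_def by blast
  define Sn :: "'v \<times> 'v set set \<Rightarrow> real" where "Sn n = (\<Sum>y\<in>{y. y \<in> N' \<and> y \<in> snd n}. d y)" for n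
  have Sn_alt: "Sn n = (\<Sum>y\<in>N'. (if y \<in> snd n then 1 else 0) * d y)" for n
  proof -
    have "Sn n = (\<Sum>y\<in>N'. if y \<in> snd n then d y else 0)"
      unfolding Sn_def using sum.inter_filter[OF finN', of d "\<lambda>y. y \<in> snd n"] by simp
    also have "\<dots> = (\<Sum>y\<in>N'. (if y \<in> snd n then 1 else 0) * d y)" by (rule sum.cong) auto
    finally show ?thesis .
  qed
  have SnJ: "Sn n = 0" if "n \<in> J" for n using d(3) that Sn_alt by simp
  define \<sigma> :: "'v \<times> 'v set set \<Rightarrow> real" where "\<sigma> n = (if fst n \<in> V1 then (1::real) else -1)" for n
  have "(\<Sum>n\<in>Nd. \<sigma> n * Sn n) = (\<Sum>n\<in>Nd. \<Sum>y\<in>{y. y \<in> N' \<and> y \<in> snd n}. \<sigma> n * d y)"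
    by (simp add: Sn_def sum_distrib_left)
  also have "\<dots> = (\<Sum>y\<in>N'. \<Sum>n\<in>{n. n \<in> Nd \<and> y \<in> snd n}. \<sigma> n * d y)" by (rule dcount)
  also have "\<dots> = (\<Sum>y\<in>N'. 0)"
  proof (rule sum.cong[OF refl])
    fix y assume "y \<in> N'"
    then obtain a b where ab: "a \<in> V1" "b \<in> V2" "a \<noteq> b" "{n \<in> Nd. y \<in> snd n} = {(a, Q a y), (b, Q b y)}"
      using twoends by blast
    have "b \<notin> V1" using ab V12 by auto
    thus "(\<Sum>n\<in>{n. n \<in> Nd \<and> y \<in> snd n}. \<sigma> n * d y) = 0" using ab by (simp add: \<sigma>_def)
  qed
  finally have sig0: "(\<Sum>n\<in>Nd. \<sigma> n * Sn n) = 0" by simp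
  have "(\<Sum>n\<in>Nd. \<sigma> n * Sn n) = \<sigma> n0 * Sn n0 + (\<Sum>n\<in>J. \<sigma> n * Sn n)"
    unfolding J_def using n0 finNd by (simp add: sum.remove)
  also have "(\<Sum>n\<in>J. \<sigma> n * Sn n) = 0" using SnJ by simp
  finally have "\<sigma> n0 * Sn n0 = 0" using sig0 by simp
  hence Sn0: "Sn n0 = 0" by (simp add: \<sigma>_def split: if_splits)
  have SnNd: "Sn n = 0" if "n \<in> Nd" for n using SnJ Sn0 that J_def by (cases "n = n0") auto
  have bd: "bal d" unfolding bal_def
  proof (intro allI impI)
    fix v e assume einc: "e \<in> inc E v"
    have fQ: "finite (Q v e)" by (rule fin_BQW)
    have "sum d (Q v e) = sum d (Q v e \<inter> N')"
      using d(1) fQ by (intro sum.mono_neutral_right) auto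
    also have "\<dots> = 0"
    proof (cases "Q v e \<inter> N' = {}")
      case False
      then obtain e' where e': "e' \<in> Q v e" "e' \<in> N'" by auto
      have Qe: "Q v e' = Q v e" using Q_eq e' einc by blast
      have "v \<in> e'" using e' by (simp add: mem_Q inc_iff)
      hence "(v, Q v e) \<in> Nd" using Nd_mem[of "(v, Q v e)"] e'(2) Qe by blast
      hence "Sn (v, Q v e) = 0" by (rule SnNd)
      thus ?thesis unfolding Sn_def by (simp add: Int_def conj_commute)
    qed simp
    finally show "sum d (Q v e) = 0" .
  qed
  have sup: "\<forall>e. d e \<noteq> 0 \<longrightarrow> 0 < x e \<and> e \<in> E2"
    using d(1) by (auto simp: N'_def pos_def)
  show False using noA bd sup d(2) by blast
qed

end



lemma ex_ext:
  fixes x :: "'a \<Rightarrow> real"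
  assumes fin: "finite A" and tr: "\<forall>e\<in>A. \<forall>f\<in>A. \<forall>g\<in>A. R e f \<longrightarrow> R f g \<longrightarrow> R e g"
    and irr: "\<forall>e\<in>A. \<not> R e e" and nn: "\<forall>e. 0 \<le> x e" and ex: "\<exists>e\<in>A. x e > 0"
  shows "\<exists>e\<in>A. x e > 0 \<and> sum x {f\<in>A. R f e} = 0"
proof -
  define P where "P = {e\<in>A. x e > 0}"
  define h where "h e = sum x {f\<in>A. R f e}" for e
  have finP: "finite P" using fin P_def by auto
  have neP: "P \<noteq> {}" using ex P_def by auto
  have "Min (h ` P) \<in> h ` P" using finP neP by (intro Min_in) auto
  then obtain e where eP: "e \<in> P" and he: "h e = Min (h ` P)" by auto
  have emin: "h e \<le> h f" if "f \<in> P" for f unfolding he using finP that by (intro Min_le) auto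
  show ?thesis
  proof (rule ccontr)
    assume nt: "\<not> ?thesis"
    have eA: "e \<in> A" "x e > 0" using eP P_def by auto
    hence hne: "h e \<noteq> 0" using nt unfolding h_def by blast
    have "\<exists>f\<in>{f\<in>A. R f e}. x f \<noteq> 0"
    proof (rule ccontr)
      assume "\<not> (\<exists>f\<in>{f\<in>A. R f e}. x f \<noteq> 0)"
      hence "h e = 0" unfolding h_def by (intro sum.neutral) auto
      thus False using hne by simp
    qed
    then obtain f where f: "f \<in> A" "R f e" "x f \<noteq> 0" by auto
    have fpos: "x f > 0" using f nn by (metis less_eq_real_def)
    have finS: "finite {g\<in>A. R g e}" using fin by auto
    have sub: "{g\<in>A. R g f} \<subseteq> {g\<in>A. R g e} - {f}"
    proof
      fix g assume g: "g \<in> {g\<in>A. R g f}"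
      hence "R g e" using tr f eA by blast
      moreover have "g \<noteq> f" using g irr by auto
      ultimately show "g \<in> {g\<in>A. R g e} - {f}" using g by auto
    qed
    have "h f \<le> sum x ({g\<in>A. R g e} - {f})" unfolding h_def
      using finS sub nn by (intro sum_mono2) auto
    also have "\<dots> = h e - x f" unfolding h_def using finS f by (simp add: sum_diff1)
    finally have "h f < h e" using fpos by simp
    moreover have "f \<in> P" using f fpos P_def by auto
    ultimately show False using emin by fastforce
  qed
qed

lemma arith_c: "0 \<le> (l::real) \<Longrightarrow> (c::nat) \<le> 1 \<or> (c = 2 \<and> X \<ge> 1 + l) \<Longrightarrow> X \<ge> 1 \<Longrightarrow> X - l * real c \<ge> 1 - l"
proof -
  assume l: "0 \<le> l" and c: "c \<le> 1 \<or> (c = 2 \<and> X \<ge> 1 + l)" and X: "X \<ge> 1"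
  show ?thesis
  proof (cases "c \<le> 1")
    case True
    hence "real c \<le> 1" by simp
    hence "l * real c \<le> l * 1" using l by (intro mult_left_mono) auto
    thus ?thesis using X by simp
  next
    case False thus ?thesis using c by simp
  qed
qed

context nus begin

lemma zero_sum:
  fixes x :: "'a \<Rightarrow> real"
  shows "(\<forall>e. 0 \<le> x e) \<Longrightarrow> (\<forall>f\<in>F. \<not> 0 < x f) \<Longrightarrow> sum x F = 0"
  by (intro sum.neutral) (metis less_eq_real_def)

lemma card_le1: "finite F \<Longrightarrow> (\<forall>a\<in>F. \<forall>b\<in>F. a = b) \<Longrightarrow> card F \<le> 1"
  using card_le_Suc0_iff_eq by (metis One_nat_def)

end


context nus begin

abbreviation "PP \<equiv> conv_hull {char_vec M | M. nu_stable E E1 E2 pref M}"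

lemma caseB:
  assumes xS: "x \<in> Sset"
    and U: "\<forall>e v. e \<in> pos x \<longrightarrow> v \<in> e \<longrightarrow> Q v e \<inter> pos x = {e}"
    and IH: "\<forall>y. y \<in> Sset \<longrightarrow> card (pos y) < card (pos x) \<longrightarrow> y \<in> PP"
  shows "x \<in> PP"
proof -
  note D = S_D[OF xS]
  note cs = CS[OF xS]
  have nn: "\<forall>e. 0 \<le> x e" using D(1) by blast
  define Z where "Z v = sum x (inc E v)" for v
  have Z01: "Z v = 0 \<or> Z v = 1" if "v \<in> V" for v using cs(1) that unfolding Z_def by blast
  have zero_at: "x f = 0" if "Z v = 0" "f \<in> inc E v" for v f
    using sum_nonneg_eq_0_iff[OF fin_inc[of v], where f=x] nn that unfolding Z_def by blast
  have zsum: "sum x F = 0" if "Z v = 0" "F \<subseteq> inc E v" for v F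
    using zero_at[OF that(1)] that(2) by (intro sum.neutral) blast
  have le_sum: "x f \<le> sum x F" if "f \<in> F" "F \<subseteq> E" for f F
  proof -
    have "finite F" using that(2) finE finite_subset by blast
    thus ?thesis using that(1) nn by (intro member_le_sum) auto
  qed
  have posE: "e \<in> E" if "x e > 0" for e
  proof (rule ccontr)
    assume "e \<notin> E" hence "x e = 0" using D(2) by blast
    thus False using that by simp
  qed
  have posZ: "Z v = 1" if "x e > 0" "v \<in> e" for e v
  proof -
    have ei: "e \<in> inc E v" using posE[OF that(1)] that(2) by (simp add: inc_iff)
    have "x e \<le> Z v" unfolding Z_def by (rule le_sum[OF ei inc_sub])
    moreover have "v \<in> V" using incV[OF ei] .
    ultimately show ?thesis using Z01 that(1) by fastforce
  qed
  have QX: "sum x (Q v e) = x e" if "x e > 0" "v \<in> e" for e v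
  proof -
    have "e \<in> pos x" using that posE by (simp add: pos_def)
    hence "Q v e \<inter> pos x = {e}" using U that(2) by blast
    thus ?thesis using sum_pos_part[OF nn BQW_E(2)] by simp
  qed
  have Tt: "x e + sum x (B a e) + sum x (B b e) = 1" if "x e > 0" "e = {a,b}" "a \<noteq> b" for e a b
  proof -
    have "sum x (Q a e) + (\<Sum>w\<in>e. sum x (B w e)) = 1" using cs(2) posE[OF that(1)] that by auto
    thus ?thesis using QX[OF that(1)] that by simp
  qed
  have Kx: "sum x (B a e) = sum x (W b e)" if "x e > 0" "e = {a,b}" "a \<noteq> b" for e a b
  proof -
    have eb: "e \<in> inc E b" using posE[OF that(1)] that by (simp add: inc_iff)
    have "Z b = 1" using posZ[OF that(1)] that by simp
    hence "1 = sum x (B b e) + sum x (Q b e) + sum x (W b e)" using sum_part[OF eb, of x] unfolding Z_def by simp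
    moreover have "sum x (Q b e) = x e" using QX[OF that(1)] that by simp
    ultimately show ?thesis using Tt[OF that] by linarith
  qed
  define M where "M = {e \<in> E. 0 < x e \<and> (\<exists>a\<in>e. a \<in> V1 \<and> sum x (B a e) = 0)}"
  have ME: "M \<subseteq> E" and Mpos: "\<And>e. e \<in> M \<Longrightarrow> 0 < x e" using M_def by auto
  have finM: "finite M" using ME finE finite_subset by blast
  have onlyV1: "a = a0" if "e = {a0,b0}" "a0 \<in> V1" "b0 \<in> V2" "a \<in> e" "a \<in> V1" for e a a0 b0
    using that V12 by blast
  have onlyV2: "b = b0" if "e = {a0,b0}" "a0 \<in> V1" "b0 \<in> V2" "b \<in> e" "b \<in> V2" for e b a0 b0
    using that V12 by blast
  have Mtop: "sum x (B a e) = 0" if th: "e \<in> M" "a \<in> e" "a \<in> V1" for e a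
  proof -
    obtain a' where a': "a' \<in> e" "a' \<in> V1" "sum x (B a' e) = 0" using th(1) M_def by blast
    obtain a0 b0 where ab: "a0 \<in> V1" "b0 \<in> V2" "e = {a0,b0}" "a0 \<noteq> b0" using edge_form ME th(1) by blast
    have "a = a0" "a' = a0" using onlyV1[OF ab(3,1,2)] that a' by auto
    thus ?thesis using a' by simp
  qed
  have Mbot: "sum x (W b e) = 0" if th: "e \<in> M" "b \<in> e" "b \<in> V2" for e b
  proof -
    obtain a0 b0 where ab: "a0 \<in> V1" "b0 \<in> V2" "e = {a0,b0}" "a0 \<noteq> b0" using edge_form ME th(1) by blast
    have "b = b0" using onlyV2[OF ab(3,1,2)] that by auto
    moreover have "sum x (B a0 e) = 0" using Mtop[OF that(1)] ab by auto
    ultimately show ?thesis using Kx[OF Mpos[OF that(1)] ab(3,4)] by simp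
  qed
  have Mch1: "e \<in> M" if "x e > 0" "a \<in> e" "a \<in> V1" "sum x (B a e) = 0" for e a
    using that posE[OF that(1)] unfolding M_def by blast
  have Mch2: "e \<in> M" if th: "x e > 0" "b \<in> e" "b \<in> V2" "sum x (W b e) = 0" for e b
  proof -
    obtain a0 b0 where ab: "a0 \<in> V1" "b0 \<in> V2" "e = {a0,b0}" "a0 \<noteq> b0" using edge_form posE[OF th(1)] by blast
    have "b = b0" using onlyV2[OF ab(3,1,2)] that by auto
    hence "sum x (B a0 e) = 0" using Kx[OF that(1) ab(3,4)] that by simp
    thus ?thesis using Mch1[OF that(1)] ab by auto
  qed
  have top_pref: "pref v e f" if "f \<in> inc E v" "x f > 0" "e \<in> inc E v" "sum x (B v e) = 0" for v e f
  proof (rule ccontr)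
    assume "\<not> pref v e f"
    hence "strict_pref pref v f e" using ptotal[OF that(1,3)] by (auto simp: strict_pref_def)
    hence "f \<in> B v e" using that(1) by (simp add: mem_B)
    hence "x f \<le> sum x (B v e)" by (rule le_sum[OF _ BQW_E(1)])
    thus False using that by simp
  qed
  have bot_pref: "pref v f e" if "f \<in> inc E v" "x f > 0" "e \<in> inc E v" "sum x (W v e) = 0" for v e f
  proof (rule ccontr)
    assume "\<not> pref v f e"
    hence "strict_pref pref v e f" using ptotal[OF that(1,3)] by (auto simp: strict_pref_def)
    hence "f \<in> W v e" using that(1) by (simp add: mem_W)
    hence "x f \<le> sum x (W v e)" by (rule le_sum[OF _ BQW_E(3)])
    thus False using that by simp
  qed
  have Muniq: "e = f" if "e \<in> M" "f \<in> M" "v \<in> e" "v \<in> f" for e f v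
  proof -
    have ei: "e \<in> inc E v" and fi: "f \<in> inc E v" using that ME by (auto simp: inc_iff)
    have vV: "v \<in> V" using incV[OF ei] .
    have "pref v e f \<and> pref v f e"
    proof (cases "v \<in> V1")
      case True
      thus ?thesis using top_pref[OF fi Mpos[OF that(2)] ei Mtop[OF that(1,3)]]
        top_pref[OF ei Mpos[OF that(1)] fi Mtop[OF that(2,4)]] by blast
    next
      case False
      hence v2: "v \<in> V2" using vV by blast
      thus ?thesis using bot_pref[OF fi Mpos[OF that(2)] ei Mbot[OF that(1,3) v2]]
        bot_pref[OF ei Mpos[OF that(1)] fi Mbot[OF that(2,4) v2]] by blast
    qed
    hence "f \<in> Q v e" using fi by (simp add: mem_Q indiff_def)
    moreover have "f \<in> pos x" using Mpos[OF that(2)] ME that(2) by (auto simp: pos_def)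
    moreover have "Q v e \<inter> pos x = {e}" using U that(1,3) Mpos[OF that(1)] ME by (auto simp: pos_def)
    ultimately show ?thesis by blast
  qed
  have trB: "\<forall>e\<in>inc E v. \<forall>f\<in>inc E v. \<forall>g\<in>inc E v. strict_pref pref v e f \<longrightarrow> strict_pref pref v f g \<longrightarrow> strict_pref pref v e g" for v
    using st1 by (metis strict_pref_def)
  have trW: "\<forall>e\<in>inc E v. \<forall>f\<in>inc E v. \<forall>g\<in>inc E v. strict_pref pref v f e \<longrightarrow> strict_pref pref v g f \<longrightarrow> strict_pref pref v g e" for v
    using st1 by (metis strict_pref_def)
  have Mex: "\<exists>e\<in>M. v \<in> e" if "v \<in> V" "Z v = 1" for v
  proof -
    have ex: "\<exists>e\<in>inc E v. x e > 0"
    proof (rule ccontr)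
      assume "\<not> ?thesis"
      hence "Z v = 0" unfolding Z_def using zero_sum[OF nn] by blast
      thus False using that by simp
    qed
    show ?thesis
    proof (cases "v \<in> V1")
      case True
      obtain e where e: "e \<in> inc E v" "x e > 0" "sum x {f \<in> inc E v. strict_pref pref v f e} = 0"
        using ex_ext[where R="\<lambda>f e. strict_pref pref v f e", OF fin_inc trB _ nn ex] strict_irrefl by blast
      have "e \<in> M" using Mch1[OF e(2) _ True] e by (simp add: better_def inc_iff)
      thus ?thesis using e(1) by (auto simp: inc_iff)
    next
      case False
      hence v2: "v \<in> V2" using that by blast
      obtain e where e: "e \<in> inc E v" "x e > 0" "sum x {f \<in> inc E v. strict_pref pref v e f} = 0"
        using ex_ext[where R="\<lambda>f e. strict_pref pref v e f", OF fin_inc trW _ nn ex] strict_irrefl by blast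
      have "e \<in> M" using Mch2[OF e(2) _ v2] e by (simp add: W_def inc_iff)
      thus ?thesis using e(1) by (auto simp: inc_iff)
    qed
  qed
  have mM: "matching E M" unfolding matching_def
  proof (intro conjI allI)
    show "M \<subseteq> E" by (rule ME)
    fix v
    have "finite (inc M v)" using finM by (simp add: inc_def)
    moreover have "\<forall>a\<in>inc M v. \<forall>b\<in>inc M v. a = b"
      unfolding inc_iff by (intro ballI) (rule Muniq, auto simp: inc_iff)
    ultimately show "card (inc M v) \<le> 1" by (rule card_le1)
  qed
  have mcases: "(medge M v = {} \<and> Z v = 0) \<or> (medge M v \<in> M \<and> v \<in> medge M v)" if "v \<in> V" for v
  proof (cases "medge M v = {}")
    case True
    have "\<not> (\<exists>e\<in>M. v \<in> e)"
    proof
      assume "\<exists>e\<in>M. v \<in> e"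
      then obtain e where "e \<in> M" "v \<in> e" by blast
      hence "medge M v = e" "e \<noteq> {}" using medge_eq[OF mM] edge_ne ME by auto
      thus False using True by simp
    qed
    hence "Z v \<noteq> 1" using Mex that by blast
    thus ?thesis using Z01[OF that] True by simp
  next
    case False thus ?thesis using medge_cases[OF mM] by blast
  qed
  have H1: "sum x (B a e) = 0" if "a \<in> V1" "e \<in> inc E a" "pref a e (medge M a)" for a e
  proof -
    have aV: "a \<in> V" using that(1) by blast
    show ?thesis
    proof (cases "medge M a = {} \<and> Z a = 0")
      case True thus ?thesis using zsum BQW_sub by blast
    next
      case False
      hence h: "medge M a \<in> M" "a \<in> medge M a" using mcases[OF aV] by blast+
      define h where "h = medge M a"
      have hi: "h \<in> inc E a" using h ME h_def by (auto simp: inc_iff)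
      have sh: "sum x (B a h) = 0" using Mtop[OF h that(1)] h_def by simp
      have "\<forall>f\<in>B a e. \<not> 0 < x f"
      proof (intro ballI notI)
        fix f assume f: "f \<in> B a e" "0 < x f"
        have fi: "f \<in> inc E a" "strict_pref pref a f e" using f by (auto simp: mem_B)
        have "strict_pref pref a f h" using st1[OF hi fi(1) that(2) fi(2)] that(3) h_def by simp
        moreover have "pref a h f" using top_pref[OF fi(1) f(2) hi sh] .
        ultimately show False by (simp add: strict_pref_def)
      qed
      thus ?thesis by (rule zero_sum[OF nn])
    qed
  qed
  have H1s: "sum x (Q a e) = 0" if "a \<in> V1" "e \<in> inc E a" "strict_pref pref a e (medge M a)" for a e
  proof -
    have aV: "a \<in> V" using that(1) by blast
    show ?thesis
    proof (cases "medge M a = {} \<and> Z a = 0")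
      case True thus ?thesis using zsum BQW_sub by blast
    next
      case False
      hence h: "medge M a \<in> M" "a \<in> medge M a" using mcases[OF aV] by blast+
      define h where "h = medge M a"
      have hi: "h \<in> inc E a" using h ME h_def by (auto simp: inc_iff)
      have sh: "sum x (B a h) = 0" using Mtop[OF h that(1)] h_def by simp
      have "\<forall>f\<in>Q a e. \<not> 0 < x f"
      proof (intro ballI notI)
        fix f assume f: "f \<in> Q a e" "0 < x f"
        have fi: "f \<in> inc E a" "pref a f e" using f by (auto simp: mem_Q indiff_def)
        have "strict_pref pref a f h" using st2[OF hi fi(1) that(2) fi(2)] that(3) h_def by simp
        moreover have "pref a h f" using top_pref[OF fi(1) f(2) hi sh] .
        ultimately show False by (simp add: strict_pref_def)
      qed
      thus ?thesis by (rule zero_sum[OF nn])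
    qed
  qed
  have H3: "x e = 0" if "a \<in> V1" "e \<in> inc E a" "pref a e (medge M a)" "e \<notin> M" for a e
  proof -
    have aV: "a \<in> V" using that(1) by blast
    show ?thesis
    proof (cases "medge M a = {} \<and> Z a = 0")
      case True thus ?thesis using zero_at that(2) by blast
    next
      case False
      hence h: "medge M a \<in> M" "a \<in> medge M a" using mcases[OF aV] by blast+
      define h where "h = medge M a"
      have hi: "h \<in> inc E a" using h ME h_def by (auto simp: inc_iff)
      have sh: "sum x (B a h) = 0" using Mtop[OF h that(1)] h_def by simp
      show ?thesis
      proof (rule ccontr)
        assume "x e \<noteq> 0"
        hence ep: "0 < x e" using nn by (metis less_eq_real_def)
        have "pref a h e" using top_pref[OF that(2) ep hi sh] .
        hence "e \<in> Q a h" using that(2,3) h_def by (simp add: mem_Q indiff_def)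
        moreover have "e \<in> pos x" using ep posE by (simp add: pos_def)
        moreover have "Q a h \<inter> pos x = {h}" using U h(1,2) h_def Mpos ME by (auto simp: pos_def)
        ultimately have "e = h" by blast
        thus False using that(4) h h_def by simp
      qed
    qed
  qed
  have BbM: "sum x (B b g) = 1 - x g" if "b \<in> V2" "g \<in> M" "b \<in> g" for b g
  proof -
    have gi: "g \<in> inc E b" using that ME by (auto simp: inc_iff)
    have "Z b = 1" using posZ[OF Mpos[OF that(2)] that(3)] .
    hence "1 = sum x (B b g) + sum x (Q b g) + sum x (W b g)" using sum_part[OF gi, of x] unfolding Z_def by simp
    moreover have "sum x (Q b g) = x g" using QX[OF Mpos[OF that(2)] that(3)] .
    moreover have "sum x (W b g) = 0" using Mbot[OF that(2,3,1)] .
    ultimately show ?thesis by linarith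
  qed
  have H2: "sum x (B b e) < 1" if "b \<in> V2" "e \<in> inc E b" "pref b e (medge M b)" for b e
  proof -
    have bV: "b \<in> V" using that(1) by blast
    show ?thesis
    proof (cases "medge M b = {} \<and> Z b = 0")
      case True thus ?thesis using zsum BQW_sub by (metis zero_less_one)
    next
      case False
      hence g: "medge M b \<in> M" "b \<in> medge M b" using mcases[OF bV] by blast+
      define g where "g = medge M b"
      have gi: "g \<in> inc E b" using g ME g_def by (auto simp: inc_iff)
      have sub: "B b e \<subseteq> B b g"
      proof
        fix f assume f: "f \<in> B b e"
        have fi: "f \<in> inc E b" "strict_pref pref b f e" using f by (auto simp: mem_B)
        have "strict_pref pref b f g" using st1[OF gi fi(1) that(2) fi(2)] that(3) g_def by simp
        thus "f \<in> B b g" using fi by (simp add: mem_B)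
      qed
      have "sum x (B b e) \<le> sum x (B b g)" using sub nn by (intro sum_mono2[OF fin_BQW(1)]) auto
      also have "\<dots> = 1 - x g" using BbM[OF that(1) g] g_def by simp
      finally show ?thesis using Mpos[OF g(1)] g_def by simp
    qed
  qed
  have H2s: "sum x (Q b e) + sum x (B b e) < 1" if "b \<in> V2" "e \<in> inc E b" "strict_pref pref b e (medge M b)" for b e
  proof -
    have bV: "b \<in> V" using that(1) by blast
    show ?thesis
    proof (cases "medge M b = {} \<and> Z b = 0")
      case True
      hence "sum x (Q b e) = 0" "sum x (B b e) = 0" using zsum BQW_sub by blast+
      thus ?thesis by simp
    next
      case False
      hence g: "medge M b \<in> M" "b \<in> medge M b" using mcases[OF bV] by blast+
      define g where "g = medge M b"
      have gi: "g \<in> inc E b" using g ME g_def by (auto simp: inc_iff)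
      have seg: "strict_pref pref b e g" using that(3) g_def by simp
      have sub: "Q b e \<union> B b e \<subseteq> B b g"
      proof
        fix f assume f: "f \<in> Q b e \<union> B b e"
        show "f \<in> B b g"
        proof (cases "f \<in> Q b e")
          case True
          hence fi: "f \<in> inc E b" "pref b f e" by (auto simp: mem_Q indiff_def)
          have "strict_pref pref b f g" using st2[OF gi fi(1) that(2) fi(2) seg] .
          thus ?thesis using fi by (simp add: mem_B)
        next
          case False
          hence fi: "f \<in> inc E b" "strict_pref pref b f e" using f by (auto simp: mem_B)
          have "pref b e g" using seg by (simp add: strict_pref_def)
          hence "strict_pref pref b f g" using st1[OF gi fi(1) that(2) fi(2)] by simp
          thus ?thesis using fi by (simp add: mem_B)
        qed
      qed
      have "sum x (Q b e) + sum x (B b e) = sum x (Q b e \<union> B b e)"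
        using disj(1) fin_BQW by (subst sum.union_disjoint) (auto simp: Int_commute)
      also have "\<dots> \<le> sum x (B b g)" using sub nn by (intro sum_mono2[OF fin_BQW(1)]) auto
      also have "\<dots> = 1 - x g" using BbM[OF that(1) g] g_def by simp
      finally show ?thesis using Mpos[OF g(1)] g_def by simp
    qed
  qed
  have stable: "nu_stable E E1 E2 pref M" unfolding nu_stable_def
  proof (intro conjI ballI notI)
    show "matching E M" by (rule mM)
  next
    fix e assume e: "e \<in> E1 - M" and wb: "weakly_blocks pref M e"
    have eE: "e \<in> E" using e E12 by blast
    obtain a b where ab: "a \<in> V1" "b \<in> V2" "e = {a,b}" "a \<noteq> b" using edge_form[OF eE] by blast
    have ai: "e \<in> inc E a" and bi: "e \<in> inc E b" using eE ab by (auto simp: inc_iff)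
    have pa: "pref a e (medge M a)" and pb: "pref b e (medge M b)" using wb ab by (auto simp: weakly_blocks_def)
    have "x e = 0" using H3[OF ab(1) ai pa] e by blast
    moreover have "sum x (B a e) = 0" using H1[OF ab(1) ai pa] .
    moreover have "sum x (B b e) < 1" using H2[OF ab(2) bi pb] .
    moreover have "1 \<le> x e + (\<Sum>v\<in>e. sum x (B v e))" using D(4) e by blast
    ultimately show False using ab by simp
  next
    fix e assume e: "e \<in> E2 - M" and sb: "strongly_blocks pref M e"
    have eE: "e \<in> E" using e E12 by blast
    have e2: "e \<in> E2" using e by blast
    obtain a b where ab: "a \<in> V1" "b \<in> V2" "e = {a,b}" "a \<noteq> b" using edge_form[OF eE] by blast
    have ai: "e \<in> inc E a" and bi: "e \<in> inc E b" using eE ab by (auto simp: inc_iff)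
    have pa: "pref a e (medge M a)" and pb: "pref b e (medge M b)"
      using sb ab by (auto simp: strongly_blocks_def weakly_blocks_def)
    obtain w where w: "w \<in> e" "strict_pref pref w e (medge M w)" using sb by (auto simp: strongly_blocks_def)
    have Ba: "sum x (B a e) = 0" using H1[OF ab(1) ai pa] .
    have sumab: "(\<Sum>v\<in>e. sum x (B v e)) = sum x (B a e) + sum x (B b e)" using ab by simp
    have "w = a \<or> w = b" using w ab by blast
    thus False
    proof
      assume wa: "w = a"
      have "sum x (Q a e) = 0" using H1s[OF ab(1) ai] w wa by simp
      moreover have "sum x (B b e) < 1" using H2[OF ab(2) bi pb] .
      moreover have "1 \<le> sum x (Q a e) + (\<Sum>v\<in>e. sum x (B v e))" using D(5)[OF e2] ab by blast
      ultimately show False using Ba sumab by simp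
    next
      assume wb: "w = b"
      have "sum x (Q b e) + sum x (B b e) < 1" using H2s[OF ab(2) bi] w wb by simp
      moreover have "1 \<le> sum x (Q b e) + (\<Sum>v\<in>e. sum x (B v e))" using D(5)[OF e2] ab by blast
      ultimately show False using Ba sumab by simp
    qed
  qed
  have chiP: "char_vec M \<in> PP" by (rule ch_single) (use stable in blast)
  show ?thesis
  proof (cases "\<forall>e\<in>M. x e = 1")
    case True
    have "x = char_vec M"
    proof
      fix e
      show "x e = char_vec M e"
      proof (cases "e \<in> M")
        case True thus ?thesis using \<open>\<forall>e\<in>M. x e = 1\<close> by (simp add: char_vec_def)
      next
        case eM: False
        have "x e = 0"
        proof (rule ccontr)
          assume "x e \<noteq> 0"
          hence ep: "0 < x e" using nn by (metis less_eq_real_def)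
          have eE: "e \<in> E" by (rule posE[OF ep])
          obtain a b where ab: "a \<in> V1" "b \<in> V2" "e = {a,b}" "a \<noteq> b" using edge_form[OF eE] by blast
          have Za: "Z a = 1" using posZ[OF ep] ab by simp
          obtain h where h: "h \<in> M" "a \<in> h" using Mex[OF _ Za] ab by blast
          have he: "h \<noteq> e" using h eM by blast
          have xh: "x h = 1" using True h by blast
          have sub: "{h, e} \<subseteq> inc E a" using h ME eE ab by (auto simp: inc_iff)
          have "x h + x e = sum x {h, e}" using he by simp
          also have "\<dots> \<le> sum x (inc E a)" using sub nn by (intro sum_mono2[OF fin_inc]) auto
          also have "\<dots> = 1" using Za Z_def by simp
          finally show False using xh ep by simp
        qed
        thus ?thesis using eM by (simp add: char_vec_def)
      qed
    qed
    thus ?thesis using chiP by simp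
  next
    case False
    then obtain e1 where e1: "e1 \<in> M" "x e1 \<noteq> 1" by blast
    have e1le: "x e1 \<le> 1"
    proof -
      obtain a b where ab: "a \<in> V1" "b \<in> V2" "e1 = {a,b}" "a \<noteq> b" using edge_form e1(1) ME by blast
      have "x e1 \<le> sum x (inc E a)" using e1 ME ab by (intro le_sum[OF _ inc_sub]) (auto simp: inc_iff)
      also have "\<dots> \<le> 1" using D(3) ab by blast
      finally show ?thesis .
    qed
    define l where "l = Min (x ` M)"
    have Mne: "M \<noteq> {}" using e1 by blast
    have l_le: "l \<le> x f" if "f \<in> M" for f unfolding l_def using finM that by (intro Min_le) auto
    have "l \<in> x ` M" unfolding l_def using finM Mne by (intro Min_in) auto
    then obtain es where es: "es \<in> M" "x es = l" by blast
    have lpos: "0 < l" using Mpos[OF es(1)] es by simp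
    have llt: "l < 1" using l_le[OF e1(1)] e1 e1le by simp
    define y where "y e = (x e - l * char_vec M e) / (1 - l)" for e
    have chi: "char_vec M e = (if e \<in> M then 1 else 0)" for e by (simp add: char_vec_def)
    have sum_y: "sum y F = (sum x F - l * real (card (F \<inter> M))) / (1 - l)" if "F \<subseteq> E" for F
    proof -
      have fF: "finite F" using that finE finite_subset by blast
      have "sum y F = (\<Sum>e\<in>F. x e - l * char_vec M e) / (1 - l)"
        unfolding y_def by (simp add: sum_divide_distrib)
      also have "\<dots> = (sum x F - l * sum (char_vec M) F) / (1 - l)"
        by (simp add: sum_subtractf sum_distrib_left)
      also have "sum (char_vec M) F = real (card (F \<inter> M))" using sum_char[OF fF] .
      finally show ?thesis .
    qed
    have cnt: "card (F \<inter> M) \<le> 1" if "F \<subseteq> inc E v" for F v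
    proof (rule card_le1)
      show "finite (F \<inter> M)" using finM by simp
      show "\<forall>a\<in>F \<inter> M. \<forall>b\<in>F \<inter> M. a = b"
      proof (intro ballI)
        fix a b assume a: "a \<in> F \<inter> M" and b: "b \<in> F \<inter> M"
        have "v \<in> a" "v \<in> b" using a b that by (auto simp: inc_iff)
        thus "a = b" using Muniq a b by blast
      qed
    qed
    have cnt_pos: "\<exists>h. h \<in> F \<and> h \<in> M" if "card (F \<inter> M) \<noteq> 0" for F
      using that by (metis card.empty disjoint_iff)
    have f1: "l \<le> sum x F" if "h \<in> F" "h \<in> M" "F \<subseteq> E" for h F
      using l_le[OF that(2)] le_sum[OF that(1,3)] by simp
    have fy: "1 \<le> N / (1 - l)" if "1 - l \<le> N" for N using that llt by (simp add: pos_le_divide_eq)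
    have f2: "1 \<le> sum x (B b e)" if "b \<in> V2" "e \<in> inc E b" "g \<in> B b e" "g \<in> M" for b e g
    proof -
      have gi: "g \<in> inc E b" "strict_pref pref b g e" using that(3) by (auto simp: mem_B)
      have bg: "b \<in> g" using gi by (simp add: inc_iff)
      have Zb: "Z b = 1" using posZ[OF Mpos[OF that(4)] bg] .
      have Wg: "sum x (W b g) = 0" using Mbot[OF that(4) bg that(1)] .
      have "\<forall>f\<in>inc E b - B b e. \<not> 0 < x f"
      proof (intro ballI notI)
        fix f assume f: "f \<in> inc E b - B b e" "0 < x f"
        have "pref b f g" using bot_pref[OF _ f(2) gi(1) Wg] f by blast
        hence "strict_pref pref b f e" using st2[OF that(2) _ gi(1) _ gi(2)] f by blast
        thus False using f by (simp add: mem_B)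
      qed
      hence z: "sum x (inc E b - B b e) = 0" by (rule zero_sum[OF nn])
      have "sum x (inc E b) = sum x (inc E b - B b e) + sum x (B b e)"
        using sum.subset_diff[OF BQW_sub(1) fin_inc] .
      thus ?thesis using z Zb Z_def by simp
    qed
    have f3: "1 \<le> sum x (Q b e) + sum x (B b e)" if "b \<in> V2" "e \<in> inc E b" "g \<in> Q b e" "g \<in> M" for b e g
    proof -
      have gi: "g \<in> inc E b" "indiff pref b g e" using that(3) by (auto simp: mem_Q)
      have bg: "b \<in> g" using gi by (simp add: inc_iff)
      have Zb: "Z b = 1" using posZ[OF Mpos[OF that(4)] bg] .
      have Wg: "sum x (W b g) = 0" using Mbot[OF that(4) bg that(1)] .
      have subQB: "Q b e \<union> B b e \<subseteq> inc E b" using BQW_sub by blast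
      have "\<forall>f\<in>inc E b - (Q b e \<union> B b e). \<not> 0 < x f"
      proof (intro ballI notI)
        fix f assume f: "f \<in> inc E b - (Q b e \<union> B b e)" "0 < x f"
        have fi: "f \<in> inc E b" using f by blast
        have "pref b f g" using bot_pref[OF fi f(2) gi(1) Wg] .
        hence pfe: "pref b f e" using ptrans[OF fi gi(1) that(2)] gi(2) by (simp add: indiff_def)
        have "strict_pref pref b f e \<or> indiff pref b f e" using pfe by (auto simp: strict_pref_def indiff_def)
        thus False using f fi by (auto simp: mem_B mem_Q)
      qed
      hence z: "sum x (inc E b - (Q b e \<union> B b e)) = 0" by (rule zero_sum[OF nn])
      have "sum x (inc E b) = sum x (inc E b - (Q b e \<union> B b e)) + sum x (Q b e \<union> B b e)"
        using sum.subset_diff[OF subQB fin_inc] .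
      moreover have "sum x (Q b e \<union> B b e) = sum x (Q b e) + sum x (B b e)"
        using disj(1) fin_BQW by (subst sum.union_disjoint) (auto simp: Int_commute)
      ultimately show ?thesis using z Zb Z_def by simp
    qed
    have f5: "False" if "h \<in> Q v e" "h \<in> M" "h' \<in> B v e" "h' \<in> M" for v e h h'
    proof -
      have "v \<in> h" "v \<in> h'" using that by (auto simp: mem_Q mem_B inc_iff)
      hence "h = h'" using Muniq that(2,4) by blast
      thus False using that(1,3) by (auto simp: mem_Q mem_B indiff_def strict_pref_def)
    qed
    have f4: "False" if "e \<in> M" "h \<in> B v e" "h \<in> M" "v \<in> e" for v e h
    proof -
      have "v \<in> h" using that by (auto simp: mem_B inc_iff)
      hence "h = e" using Muniq that by blast
      thus False using that(2) strict_irrefl by (auto simp: mem_B)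
    qed
    have yS: "y \<in> Sset" unfolding Sset_def
    proof (intro CollectI conjI ballI allI impI)
      fix e assume "e \<notin> E" thus "y e = 0" using D(2) ME by (auto simp: y_def chi)
    next
      fix e assume "e \<in> E"
      have "0 \<le> x e - l * char_vec M e" using l_le nn[rule_format, of e] by (auto simp: chi)
      thus "0 \<le> y e" unfolding y_def using llt by simp
    next
      fix v assume v: "v \<in> V1 \<union> V2"
      have sy: "sum y (inc E v) = (Z v - l * real (card (inc E v \<inter> M))) / (1 - l)"
        using sum_y[OF inc_sub] Z_def by simp
      show "sum y (inc E v) \<le> 1"
      proof (cases "Z v = 0")
        case True
        have "inc E v \<inter> M = {}" using zero_at[OF True] Mpos by force
        thus ?thesis using sy True by simp
      next
        case False
        hence Z1: "Z v = 1" using Z01 v by blast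
        obtain h where "h \<in> M" "v \<in> h" using Mex[OF v Z1] by blast
        hence "h \<in> inc E v \<inter> M" using ME by (auto simp: inc_iff)
        hence "card (inc E v \<inter> M) \<noteq> 0" using finM by auto
        hence "card (inc E v \<inter> M) = 1" using cnt[of "inc E v \<inter> M" v] by auto
        thus ?thesis using sy Z1 llt by simp
      qed
    next
      fix e assume e1: "e \<in> E1"
      have eE: "e \<in> E" using e1 E12 by blast
      obtain a b where ab: "a \<in> V1" "b \<in> V2" "e = {a,b}" "a \<noteq> b" using edge_form[OF eE] by blast
      have ai: "e \<in> inc E a" and bi: "e \<in> inc E b" using eE ab by (auto simp: inc_iff)
      define ce :: nat where "ce = (if e \<in> M then 1 else 0)"
      define ca where "ca = card (B a e \<inter> M)"
      define cb where "cb = card (B b e \<inter> M)"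
      define X where "X = x e + sum x (B a e) + sum x (B b e)"
      have X1: "X \<ge> 1" using D(4)[OF e1] ab X_def by simp
      have ca1: "ca \<le> 1" and cb1: "cb \<le> 1" unfolding ca_def cb_def using cnt BQW_sub by blast+
      have lhs: "y e + (\<Sum>v\<in>e. sum y (B v e)) = (X - l * real (ce + ca + cb)) / (1 - l)"
      proof -
        have "y e = (x e - l * real ce) / (1 - l)" unfolding y_def ce_def by (simp add: chi)
        moreover have "(\<Sum>v\<in>e. sum y (B v e)) = sum y (B a e) + sum y (B b e)" using ab by simp
        moreover have "sum y (B a e) = (sum x (B a e) - l * real ca) / (1 - l)" using sum_y[OF BQW_E(1)] ca_def by simp
        moreover have "sum y (B b e) = (sum x (B b e) - l * real cb) / (1 - l)" using sum_y[OF BQW_E(1)] cb_def by simp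
        ultimately show ?thesis unfolding X_def by (simp add: add_divide_distrib[symmetric] algebra_simps)
      qed
      have cdisj: "ce + ca + cb \<le> 1 \<or> (ce + ca + cb = 2 \<and> X \<ge> 1 + l)"
      proof (cases "e \<in> M")
        case True
        have "ca = 0" using cnt_pos[of "B a e"] f4[OF True _ _ ] ab ca_def by blast
        moreover have "cb = 0" using cnt_pos[of "B b e"] f4[OF True _ _ ] ab cb_def by blast
        ultimately show ?thesis using ce_def True by simp
      next
        case eM: False
        hence ce0: "ce = 0" using ce_def by simp
        show ?thesis
        proof (cases "cb = 0")
          case True thus ?thesis using ce0 ca1 by simp
        next
          case False
          hence cb_1: "cb = 1" using cb1 by simp
          obtain g where g: "g \<in> B b e" "g \<in> M" using cnt_pos[of "B b e"] False cb_def by blast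
          have Bb: "1 \<le> sum x (B b e)" using f2[OF ab(2) bi g] .
          show ?thesis
          proof (cases "ca = 0")
            case True thus ?thesis using ce0 cb_1 by simp
          next
            case False
            hence ca_1: "ca = 1" using ca1 by simp
            obtain h where h: "h \<in> B a e" "h \<in> M" using cnt_pos[of "B a e"] False ca_def by blast
            have "l \<le> sum x (B a e)" using f1[OF h BQW_E(1)] .
            hence "X \<ge> 1 + l" using Bb nn X_def by (smt (verit))
            thus ?thesis using ce0 ca_1 cb_1 by simp
          qed
        qed
      qed
      have "X - l * real (ce + ca + cb) \<ge> 1 - l" by (rule arith_c[OF _ cdisj X1]) (use lpos in simp)
      thus "1 \<le> y e + (\<Sum>v\<in>e. sum y (B v e))" unfolding lhs by (rule fy)
    next
      fix e v assume e2: "e \<in> E2" and ve: "v \<in> e"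
      have eE: "e \<in> E" using e2 E12 by blast
      obtain a b where ab: "a \<in> V1" "b \<in> V2" "e = {a,b}" "a \<noteq> b" using edge_form[OF eE] by blast
      have ai: "e \<in> inc E a" and bi: "e \<in> inc E b" and vi: "e \<in> inc E v" using eE ab ve by (auto simp: inc_iff)
      define cq where "cq = card (Q v e \<inter> M)"
      define ca where "ca = card (B a e \<inter> M)"
      define cb where "cb = card (B b e \<inter> M)"
      define X where "X = sum x (Q v e) + sum x (B a e) + sum x (B b e)"
      have X1: "X \<ge> 1" using D(5)[OF e2 ve] ab X_def by simp
      have cq1: "cq \<le> 1" and ca1: "ca \<le> 1" and cb1: "cb \<le> 1" unfolding cq_def ca_def cb_def using cnt BQW_sub by blast+
      have sQ: "0 \<le> sum x F" for F using nn by (simp add: sum_nonneg)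
      have lhs: "sum y (Q v e) + (\<Sum>w\<in>e. sum y (B w e)) = (X - l * real (cq + ca + cb)) / (1 - l)"
      proof -
        have "(\<Sum>w\<in>e. sum y (B w e)) = sum y (B a e) + sum y (B b e)" using ab by simp
        moreover have "sum y (Q v e) = (sum x (Q v e) - l * real cq) / (1 - l)" using sum_y[OF BQW_E(2)] cq_def by simp
        moreover have "sum y (B a e) = (sum x (B a e) - l * real ca) / (1 - l)" using sum_y[OF BQW_E(1)] ca_def by simp
        moreover have "sum y (B b e) = (sum x (B b e) - l * real cb) / (1 - l)" using sum_y[OF BQW_E(1)] cb_def by simp
        ultimately show ?thesis unfolding X_def by (simp add: add_divide_distrib[symmetric] algebra_simps)
      qed
      have ca_l: "l \<le> sum x (B a e)" if "ca \<noteq> 0"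
        using cnt_pos[of "B a e"] that ca_def f1 BQW_E(1) by blast
      have cq_l: "l \<le> sum x (Q v e)" if "cq \<noteq> 0"
        using cnt_pos[of "Q v e"] that cq_def f1 BQW_E(2) by blast
      have cb_1: "1 \<le> sum x (B b e)" if "cb \<noteq> 0"
        using cnt_pos[of "B b e"] that cb_def f2[OF ab(2) bi] by blast
      have qa: "v \<noteq> a" if th: "cq \<noteq> 0" "ca \<noteq> 0"
      proof
        assume va: "v = a"
        obtain h where "h \<in> Q v e" "h \<in> M" using cnt_pos[of "Q v e"] th(1) cq_def by blast
        moreover obtain h' where "h' \<in> B a e" "h' \<in> M" using cnt_pos[of "B a e"] th(2) ca_def by blast
        ultimately show False using f5 va by blast
      qed
      have qb: "v \<noteq> b" if th: "cq \<noteq> 0" "cb \<noteq> 0"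
      proof
        assume vb: "v = b"
        obtain h where "h \<in> Q v e" "h \<in> M" using cnt_pos[of "Q v e"] th(1) cq_def by blast
        moreover obtain h' where "h' \<in> B b e" "h' \<in> M" using cnt_pos[of "B b e"] th(2) cb_def by blast
        ultimately show False using f5 vb by blast
      qed
      have qbb: "1 \<le> sum x (Q b e) + sum x (B b e)" if th: "cq \<noteq> 0" "v = b"
      proof -
        obtain h where "h \<in> Q v e" "h \<in> M" using cnt_pos[of "Q v e"] th(1) cq_def by blast
        thus ?thesis using f3[OF ab(2) bi] that(2) by blast
      qed
      have vab: "v = a \<or> v = b" using ve ab by blast
      have cdisj: "cq + ca + cb \<le> 1 \<or> (cq + ca + cb = 2 \<and> X \<ge> 1 + l)"
      proof (cases "cb = 0")
        case True
        show ?thesis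
        proof (cases "cq = 0 \<or> ca = 0")
          case True thus ?thesis using \<open>cb = 0\<close> cq1 ca1 by auto
        next
          case False
          hence nz: "cq \<noteq> 0" "ca \<noteq> 0" by auto
          hence vb: "v = b" using qa vab by blast
          have "1 \<le> sum x (Q b e) + sum x (B b e)" using qbb[OF nz(1) vb] .
          moreover have "l \<le> sum x (B a e)" using ca_l[OF nz(2)] .
          ultimately have "X \<ge> 1 + l" unfolding X_def using vb by simp
          moreover have "cq + ca + cb = 2" using nz cq1 ca1 \<open>cb = 0\<close> by simp
          ultimately show ?thesis by simp
        qed
      next
        case False
        hence cbv: "cb = 1" "1 \<le> sum x (B b e)" using cb1 cb_1 by auto
        show ?thesis
        proof (cases "cq = 0 \<and> ca = 0")
          case True thus ?thesis using cbv by simp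
        next
          case nb: False
          have "\<not> (cq \<noteq> 0 \<and> ca \<noteq> 0)" using qa qb False vab by blast
          hence one: "(cq = 1 \<and> ca = 0) \<or> (cq = 0 \<and> ca = 1)" using nb cq1 ca1 by auto
          thus ?thesis
          proof
            assume c: "cq = 1 \<and> ca = 0"
            have "l \<le> sum x (Q v e)" using cq_l c by simp
            hence "X \<ge> 1 + l" using cbv sQ[of "B a e"] unfolding X_def by simp
            thus ?thesis using c cbv by simp
          next
            assume c: "cq = 0 \<and> ca = 1"
            have "l \<le> sum x (B a e)" using ca_l c by simp
            hence "X \<ge> 1 + l" using cbv sQ[of "Q v e"] unfolding X_def by simp
            thus ?thesis using c cbv by simp
          qed
        qed
      qed
      have "X - l * real (cq + ca + cb) \<ge> 1 - l" by (rule arith_c[OF _ cdisj X1]) (use lpos in simp)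
      thus "1 \<le> sum y (Q v e) + (\<Sum>w\<in>e. sum y (B w e))" unfolding lhs by (rule fy)
    qed
    have "pos y \<subseteq> pos x - {es}"
    proof
      fix e assume e: "e \<in> pos y"
      hence eE: "e \<in> E" and ye: "0 < y e" by (auto simp: pos_def)
      have "0 < x e - l * char_vec M e" using ye llt unfolding y_def by (simp add: divide_pos_pos zero_less_divide_iff)
      moreover have "0 \<le> l * char_vec M e" using lpos by (simp add: chi)
      ultimately have "0 < x e" by simp
      moreover have "e \<noteq> es" using ye es unfolding y_def by (auto simp: chi)
      ultimately show "e \<in> pos x - {es}" using eE by (auto simp: pos_def)
    qed
    moreover have "es \<in> pos x" using es ME lpos by (auto simp: pos_def)
    ultimately have "pos y \<subset> pos x" by blast
    hence "card (pos y) < card (pos x)" using fin_pos psubset_card_mono by blast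
    hence yP: "y \<in> PP" using IH yS by blast
    have "x = (\<lambda>e. l * char_vec M e + (1 - l) * y e)"
    proof
      fix e show "x e = l * char_vec M e + (1 - l) * y e" unfolding y_def using llt by simp
    qed
    moreover have "(\<lambda>e. l * char_vec M e + (1 - l) * y e) \<in> PP"
      by (rule ch_comb[OF chiP yP]) (use lpos llt in auto)
    ultimately show ?thesis by simp
  qed
qed

lemma S_sub_P: "x \<in> Sset \<Longrightarrow> x \<in> PP"
proof (induction "card (pos x)" arbitrary: x rule: less_induct)
  case less
  have IH: "\<forall>y. y \<in> Sset \<longrightarrow> card (pos y) < card (pos x) \<longrightarrow> y \<in> PP" using less.hyps by blast
  show ?case
  proof (cases "\<exists>d. bal d \<and> (\<forall>e. d e \<noteq> 0 \<longrightarrow> 0 < x e \<and> e \<in> E2) \<and> (\<exists>e. d e \<noteq> 0)")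
    case True
    then obtain d where d: "bal d" "\<forall>e. d e \<noteq> 0 \<longrightarrow> 0 < x e \<and> e \<in> E2" "\<exists>e. d e \<noteq> 0" by blast
    obtain y z \<mu> where yz: "y \<in> Sset" "z \<in> Sset" "card (pos y) < card (pos x)" "card (pos z) < card (pos x)"
      "0 \<le> \<mu>" "\<mu> \<le> 1" "x = (\<lambda>e. \<mu> * y e + (1 - \<mu>) * z e)"
      using caseA[OF less.prems d] by blast
    have yP: "y \<in> PP" and zP: "z \<in> PP" using IH yz by blast+
    have "(\<lambda>e. \<mu> * y e + (1 - \<mu>) * z e) \<in> PP" by (rule ch_comb[OF yP zP yz(5,6)])
    thus ?thesis using yz(7) by simp
  next
    case False
    show ?thesis by (rule caseB[OF less.prems split_lemma[OF less.prems False] IH])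
  qed
qed

end

theorem theorem4p1:
  fixes V1 V2 :: "'v set" and E E1 E2 :: "'v set set"
    and pref :: "'v \<Rightarrow> 'v set \<Rightarrow> 'v set \<Rightarrow> bool"
  assumes "setting V1 V2 E E1 E2 pref"
  shows "conv_hull {char_vec M | M. nu_stable E E1 E2 pref M} =
    {x :: 'v set \<Rightarrow> real.
       (\<forall>e. e \<notin> E \<longrightarrow> x e = 0) \<and> (\<forall>e\<in>E. 0 \<le> x e) \<and>
       (\<forall>v \<in> V1 \<union> V2. sum x (inc E v) \<le> 1) \<and>
       (\<forall>e \<in> E1. x e + (\<Sum>v\<in>e. sum x (better E pref v e)) \<ge> 1) \<and>
       (\<forall>e \<in> E2. \<forall>v\<in>e. sum x (equiv_edges E pref v e) + (\<Sum>w\<in>e. sum x (better E pref w e)) \<ge> 1)}"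
proof -
  interpret nus V1 V2 E E1 E2 pref using assms by unfold_locales
  have "conv_hull {char_vec M | M. nu_stable E E1 E2 pref M} = Sset"
    using P_sub_S S_sub_P by blast
  thus ?thesis unfolding Sset_def .
qed



end
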